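(* Let $\psi\in\Psi$ satisfy $\lim_{t\to\infty}\frac{\psi(t\psi(t))}{\psi(t)}=1$ and let $\tau_\omega$ be a Connes–Dixmier trace on $M_\psi$. Then for every positive $x\in M_\psi$, $$\omega\Big(t\mapsto\frac{-1}{\psi(t)}\int_{1/t}^\infty\lambda\,dn_x(\lambda)\Big)\le\tau_\omega(x).$$
   Context: $\Psi$ is the class of concave increasing functions $\psi$ on $[0,\infty)$ with $\psi(\infty)=\infty$, $\psi(t)=O(t)$ as $t\to0$, $\psi(t)=o(t)$ as $t\to\infty$. For bounded measurable $x$ on $(0,\infty)$, $n_x(\lambda)=m(\{s:|x(s)|>\lambda\})$, $x^*$ is the nonincreasing right-continuous rearrangement of $|x|$, and $-\int_z^\infty\lambda\,dn_x(\lambda)=\int_0^{n_x(z)}x^*(s)ds$. $M_\psi$ is the space of bounded measurable $x$ with $\sup_{t>0}\frac1{\psi(t)}\int_0^tx^*(s)ds<\infty$. A generalised limit $\gamma$ on $L_\infty(0,\infty)$ is a positive linear functional with $\gamma(1)=1$ and $\gamma(y)=0$ whenever $y(t)\to0$. With $(My)(t)=\frac1{\log t}\int_1^t\frac{y(s)}sds$, a Connes–Dixmier trace on $M_\psi$ is $\tau_\omega(x)=\omega(t\mapsto\frac1{\psi(t)}\int_0^tx^*(s)ds)$, $0\le x\in M_\psi$, with $\omega=\gamma\circ M$ for some generalised limit $\gamma$ (additive on the positive cone). Values of functions of $t$ on a bounded initial interval do not affect $\omega$. *)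

theory Defs
  imports "HOL-Analysis.Analysis" "HOL-Library.Landau_Symbols"
begin

definition Psi_class :: "(real \<Rightarrow> real) \<Rightarrow> bool" where
  "Psi_class \<psi> \<longleftrightarrow> concave_on {0..} \<psi> \<and> mono_on {0..} \<psi> \<and>
     filterlim \<psi> at_top at_top \<and>
     \<psi> \<in> O[at_right 0](\<lambda>t. t) \<and> \<psi> \<in> o[at_top](\<lambda>t. t)"

text \<open>Bounded (Lebesgue) measurable functions on (0,infinity); values outside are irrelevant.\<close>
definition bmeas :: "(real \<Rightarrow> real) \<Rightarrow> bool" where
  "bmeas y \<longleftrightarrow> set_borel_measurable lebesgue {0<..} y \<and> bounded (y ` {0<..})"

definition distfun :: "(real \<Rightarrow> real) \<Rightarrow> real \<Rightarrow> ennreal" where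
  "distfun x l = emeasure lebesgue {s \<in> {0<..}. \<bar>x s\<bar> > l}"

definition rearr :: "(real \<Rightarrow> real) \<Rightarrow> real \<Rightarrow> real" where
  "rearr x t = Inf {l. 0 \<le> l \<and> distfun x l \<le> ennreal t}"

text \<open>The Lebesgue--Stieltjes integral  - int_z^infinity lambda d n_x(lambda):
  the measure -dn_x is the distribution of |x| (pushforward of Lebesgue measure on (0,infinity)).\<close>
definition stieltjes_tail :: "(real \<Rightarrow> real) \<Rightarrow> real \<Rightarrow> real" where
  "stieltjes_tail x z =
     (LINT l:{z<..}|(distr (restrict_space lebesgue {0<..}) borel (\<lambda>s. \<bar>x s\<bar>)). l)"

definition M_psi :: "(real \<Rightarrow> real) \<Rightarrow> (real \<Rightarrow> real) \<Rightarrow> bool" where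
  "M_psi \<psi> x \<longleftrightarrow> bmeas x \<and>
     bdd_above ((\<lambda>t. (1 / \<psi> t) * (LINT s:{0..t}|lborel. rearr x s)) ` {0<..})"

definition generalised_limit :: "((real \<Rightarrow> real) \<Rightarrow> real) \<Rightarrow> bool" where
  "generalised_limit \<gamma> \<longleftrightarrow>
     (\<forall>y z. bmeas y \<longrightarrow> bmeas z \<longrightarrow> \<gamma> (\<lambda>t. y t + z t) = \<gamma> y + \<gamma> z) \<and>
     (\<forall>y c. bmeas y \<longrightarrow> \<gamma> (\<lambda>t. c * y t) = c * \<gamma> y) \<and>
     (\<forall>y. bmeas y \<longrightarrow> (AE t in lebesgue. t > 0 \<longrightarrow> 0 \<le> y t) \<longrightarrow> 0 \<le> \<gamma> y) \<and>
     \<gamma> (\<lambda>t. 1) = 1 \<and>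
     (\<forall>y. bmeas y \<longrightarrow> (y \<longlongrightarrow> 0) at_top \<longrightarrow> \<gamma> y = 0)"

definition Mmean :: "(real \<Rightarrow> real) \<Rightarrow> real \<Rightarrow> real" where
  "Mmean y t = (if 1 < t then (1 / ln t) * (LINT s:{1..t}|lborel. y s / s) else 0)"

definition dixmier_omega :: "((real \<Rightarrow> real) \<Rightarrow> real) \<Rightarrow> (real \<Rightarrow> real) \<Rightarrow> real" where
  "dixmier_omega \<gamma> y = \<gamma> (Mmean y)"

definition dixmier_trace ::
  "((real \<Rightarrow> real) \<Rightarrow> real) \<Rightarrow> (real \<Rightarrow> real) \<Rightarrow> (real \<Rightarrow> real) \<Rightarrow> real" where
  "dixmier_trace \<gamma> \<psi> x =
     dixmier_omega \<gamma> (\<lambda>t. (1 / \<psi> t) * (LINT s:{0..t}|lborel. rearr x s))"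

end

theory Submission
  imports Defs
begin


lemma psi_facts:
  assumes "Psi_class \<psi>"
  shows psi_mono: "\<And>a b. 0 \<le> a \<Longrightarrow> a \<le> b \<Longrightarrow> \<psi> a \<le> \<psi> b"
    and psi_top: "filterlim \<psi> at_top at_top"
    and psi_cont: "continuous_on {0<..} \<psi>"
  using assms unfolding Psi_class_def
proof -
  show "\<And>a b. 0 \<le> a \<Longrightarrow> a \<le> b \<Longrightarrow> \<psi> a \<le> \<psi> b" using assms unfolding Psi_class_def mono_on_def by auto
  show "filterlim \<psi> at_top at_top" using assms unfolding Psi_class_def by auto
  have "convex_on {0..} (\<lambda>x. - \<psi> x)" using assms unfolding Psi_class_def concave_on_def by auto
  then have "convex_on {0<..} (\<lambda>x. - \<psi> x)" by (rule convex_on_subset) auto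
  then have "continuous_on {0<..} (\<lambda>x. - \<psi> x)" by (intro convex_on_continuous) auto
  then have "continuous_on {0<..} (\<lambda>x. - (- \<psi> x))" by (rule continuous_on_minus)
  then show "continuous_on {0<..} \<psi>" by simp
qed

lemma psi_nonneg:
  assumes "Psi_class \<psi>" "t > 0" shows "\<psi> t \<ge> 0"
proof (rule ccontr)
  assume neg: "\<not> \<psi> t \<ge> 0"
  have "\<psi> \<in> O[at_right 0](\<lambda>t. t)" using assms unfolding Psi_class_def by auto
  then obtain c where c: "c > 0" "eventually (\<lambda>u. norm (\<psi> u) \<le> c * norm u) (at_right 0)"
    by (elim landau_o.bigE)
  have e1: "eventually (\<lambda>u. u < min t (- \<psi> t / c)) (at_right (0::real))"
    using neg c(1) assms(2) by (intro order_tendstoD(2)[OF tendsto_ident_at]) (auto simp: field_simps)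
  have e2: "eventually (\<lambda>u. u > (0::real)) (at_right 0)" by (simp add: eventually_at_right_less)
  have "eventually (\<lambda>u. norm (\<psi> u) \<le> c * norm u \<and> u < min t (- \<psi> t / c) \<and> u > 0) (at_right (0::real))"
    using c(2) e1 e2 by eventually_elim auto
  then obtain u where u: "norm (\<psi> u) \<le> c * norm u" "u < min t (- \<psi> t / c)" "u > 0"
    using eventually_happens trivial_limit_at_right_real by blast
  have "\<psi> u \<le> \<psi> t" using psi_mono[OF assms(1)] u by auto
  moreover have "c * u < - \<psi> t" using u c(1) by (auto simp: field_simps)
  ultimately show False using u(1,3) by auto
qed

lemma psi_pos:
  assumes "Psi_class \<psi>" "t > 0" shows "\<psi> t > 0"
proof (rule ccontr)
  assume "\<not> \<psi> t > 0"
  then have z: "\<psi> t = 0" using psi_nonneg[OF assms] by auto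
  have h0: "\<psi> (t/2) = 0" using psi_nonneg[OF assms(1), of "t/2"] psi_mono[OF assms(1), of "t/2" t] z assms(2) by auto
  have cc: "concave_on {0..} \<psi>" using assms(1) unfolding Psi_class_def by auto
  have le: "\<psi> v \<le> 0" if v: "v > t" for v
  proof -
    define th where "th = (t/2) / (v - t/2)"
    have th: "0 \<le> th" "th \<le> 1" using v assms(2) by (auto simp: th_def field_simps)
    have eq: "(1 - th) *\<^sub>R (t/2) + th *\<^sub>R v = t" proof -
      have "v - t/2 > 0" using v assms(2) by auto
      then have h: "th * (v - t/2) = t/2" unfolding th_def by (simp add: field_simps)
      have "(1 - th) *\<^sub>R (t/2) + th *\<^sub>R v = t/2 + th*(v - t/2)" by (simp add: field_simps)
      then show ?thesis using h by simp
    qed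
    have "(1 - th) * \<psi> (t/2) + th * \<psi> v \<le> \<psi> ((1 - th) *\<^sub>R (t/2) + th *\<^sub>R v)"
      by (rule concave_onD[OF cc th]) (use v assms(2) in auto)
    then have "th * \<psi> v \<le> 0" using eq z h0 by simp
    moreover have "th > 0" using v assms(2) by (auto simp: th_def)
    ultimately show ?thesis by (simp add: mult_le_0_iff)
  qed
  have "eventually (\<lambda>v. \<psi> v > 0) at_top" using psi_top[OF assms(1)] by (simp add: filterlim_at_top_dense)
  moreover have "eventually (\<lambda>v. v > t) at_top" by (rule eventually_gt_at_top)
  ultimately have "eventually (\<lambda>v::real. False) at_top" by eventually_elim (use le in force)
  then show False by simp
qed

lemma eventually_psi_ge:
  assumes "Psi_class \<psi>" shows "eventually (\<lambda>t. \<psi> t \<ge> c) at_top"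
  using psi_top[OF assms] by (simp add: filterlim_at_top)

lemma psi_ratio:
  assumes P: "Psi_class \<psi>" and H: "((\<lambda>t. \<psi> (t * \<psi> t) / \<psi> t) \<longlongrightarrow> 1) at_top" and e: "e > 0"
  shows "eventually (\<lambda>t. \<psi> (t * \<psi> t) \<le> (1+e) * \<psi> t) at_top"
proof -
  have "eventually (\<lambda>t. \<psi> (t * \<psi> t) / \<psi> t < 1 + e) at_top"
    using order_tendstoD(2)[OF H] e by auto
  moreover have "eventually (\<lambda>t. t > (0::real)) at_top" by (rule eventually_gt_at_top)
  ultimately show ?thesis
  proof eventually_elim
    case (elim t)
    then have "\<psi> t > 0" using psi_pos[OF P] by auto
    with elim show ?case by (simp add: field_simps)
  qed
qed

lemma filterlim_tpsi:
  assumes P: "Psi_class \<psi>" shows "filterlim (\<lambda>t. t * \<psi> t) at_top at_top"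
proof (rule filterlim_at_top_mono[OF filterlim_ident])
  have "eventually (\<lambda>t. \<psi> t \<ge> 1) at_top" by (rule eventually_psi_ge[OF P])
  moreover have "eventually (\<lambda>t. t > (0::real)) at_top" by (rule eventually_gt_at_top)
  ultimately show "eventually (\<lambda>t. t \<le> t * \<psi> t) at_top"
    by eventually_elim (simp add: mult_le_cancel_left1)
qed

lemma psi_ratio_c:
  assumes P: "Psi_class \<psi>" and H: "((\<lambda>t. \<psi> (t * \<psi> t) / \<psi> t) \<longlongrightarrow> 1) at_top" and e: "e > 0"
    and c: "c > 0"
  shows "eventually (\<lambda>t. \<psi> (c * (t * \<psi> t)) \<le> (1+e) * \<psi> t) at_top"
proof -
  define e' where "e' = min 1 e / 3"
  have e': "e' > 0" "(1+e') * (1+e') \<le> 1 + e" using e by (auto simp: e'_def min_def field_simps)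
  have ev1: "eventually (\<lambda>w. \<psi> (w * \<psi> w) \<le> (1+e') * \<psi> w \<and> \<psi> w \<ge> c \<and> w > 0) at_top"
    using psi_ratio[OF P H e'(1)] eventually_psi_ge[OF P, of c] eventually_gt_at_top[of 0]
    by eventually_elim auto
  have ev2: "eventually (\<lambda>t. (\<lambda>w. \<psi> (w * \<psi> w) \<le> (1+e') * \<psi> w \<and> \<psi> w \<ge> c \<and> w > 0) (t * \<psi> t)) at_top"
    using filterlim_iff[THEN iffD1, OF filterlim_tpsi[OF P], rule_format, OF ev1] .
  show ?thesis
    using ev2 psi_ratio[OF P H e'(1)] eventually_gt_at_top[of 0]
  proof eventually_elim
    case (elim t)
    define w where "w = t * \<psi> t"
    have w: "\<psi> (w * \<psi> w) \<le> (1+e') * \<psi> w" "\<psi> w \<ge> c" "w > 0" using elim by (auto simp: w_def)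
    have "c * w \<le> w * \<psi> w" using w by (simp add: mult.commute mult_left_mono)
    then have "\<psi> (c * w) \<le> \<psi> (w * \<psi> w)" using psi_mono[OF P] w c by auto
    also have "\<dots> \<le> (1+e') * \<psi> w" by (rule w(1))
    also have "\<dots> \<le> (1+e') * ((1+e') * \<psi> t)" using elim e' by (auto simp: w_def)
    also have "\<dots> \<le> (1+e) * \<psi> t" using e' psi_pos[OF P, of t] elim
      by (metis mult.assoc mult_right_mono order_less_imp_le)
    finally show ?case by (simp add: w_def)
  qed
qed

lemma psi_double:
  assumes P: "Psi_class \<psi>" and H: "((\<lambda>t. \<psi> (t * \<psi> t) / \<psi> t) \<longlongrightarrow> 1) at_top"
  shows "eventually (\<lambda>t. \<psi> (2 * t) \<le> 2 * \<psi> t) at_top"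
  using psi_ratio[OF P H zero_less_one] eventually_psi_ge[OF P, of 2] eventually_gt_at_top[of 0]
proof eventually_elim
  case (elim t)
  have "2 * t \<le> t * \<psi> t" using elim by (simp add: mult.commute mult_left_mono)
  then have "\<psi> (2*t) \<le> \<psi> (t * \<psi> t)" using psi_mono[OF P] elim by auto
  then show ?case using elim by simp
qed

lemma psi_log_small:
  assumes P: "Psi_class \<psi>" and H: "((\<lambda>t. \<psi> (t * \<psi> t) / \<psi> t) \<longlongrightarrow> 1) at_top" and e: "\<epsilon> > 0"
  shows "eventually (\<lambda>t. ln (\<psi> t) \<le> \<epsilon> * ln t) at_top"
proof -
  define M where "M = 2 * ln 2 / \<epsilon>"
  have M: "M > 0" using e by (simp add: M_def)
  have "eventually (\<lambda>t. \<psi> (t * \<psi> t) \<le> (1+1) * \<psi> t \<and> \<psi> t \<ge> exp M \<and> t \<ge> 1) at_top"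
    using psi_ratio[OF P H zero_less_one] eventually_psi_ge[OF P, of "exp M"] eventually_ge_at_top[of 1]
    by eventually_elim auto
  then obtain T where T: "\<And>t. t \<ge> T \<Longrightarrow> \<psi> (t * \<psi> t) \<le> 2 * \<psi> t \<and> \<psi> t \<ge> exp M \<and> t \<ge> 1"
    by (auto simp: eventually_at_top_linorder)
  have T1: "T \<ge> 1" using T[of T] by auto
  define g where "g = (\<lambda>t::real. t * \<psi> t)"
  define \<tau> where "\<tau> = (\<lambda>k. (g ^^ k) T)"
  have \<tau>S: "\<tau> (Suc k) = \<tau> k * \<psi> (\<tau> k)" for k by (simp add: \<tau>_def g_def)
  have ind: "\<tau> k \<ge> T \<and> ln (\<tau> k) \<ge> ln T + k * M \<and> ln (\<psi> (\<tau> k)) \<le> ln (\<psi> T) + k * ln 2" for k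
  proof (induction k)
    case 0 then show ?case by (simp add: \<tau>_def)
  next
    case (Suc k)
    have Tk: "\<psi> (\<tau> k * \<psi> (\<tau> k)) \<le> 2 * \<psi> (\<tau> k)" "\<psi> (\<tau> k) \<ge> exp M" "\<tau> k \<ge> 1"
      using T[of "\<tau> k"] Suc by auto
    have pos: "\<psi> (\<tau> k) > 0" using Tk(2) by (meson exp_gt_zero less_le_trans)
    have "exp M > 1" using M by simp
    then have ge1: "\<psi> (\<tau> k) > 1" using Tk(2) by linarith
    have a: "\<tau> (Suc k) \<ge> T" using Suc Tk ge1 unfolding \<tau>S
      by (smt (verit, best) mult_le_cancel_left1)
    have "ln (\<tau> (Suc k)) = ln (\<tau> k) + ln (\<psi> (\<tau> k))" unfolding \<tau>S using Tk pos by (simp add: ln_mult)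
    moreover have "ln (\<psi> (\<tau> k)) \<ge> M" using Tk(2) pos by (metis ln_exp ln_le_cancel_iff exp_gt_zero)
    ultimately have b: "ln (\<tau> (Suc k)) \<ge> ln T + Suc k * M" using Suc by (simp add: algebra_simps)
    have "ln (\<psi> (\<tau> (Suc k))) \<le> ln (2 * \<psi> (\<tau> k))" unfolding \<tau>S
      using Tk(1) psi_pos[OF P, of "\<tau> k * \<psi> (\<tau> k)"] pos Tk(3) by simp
    also have "\<dots> = ln 2 + ln (\<psi> (\<tau> k))" using pos by (simp add: ln_mult)
    finally have c: "ln (\<psi> (\<tau> (Suc k))) \<le> ln (\<psi> T) + Suc k * ln 2" using Suc by (simp add: algebra_simps)
    show ?case using a b c by blast
  qed
  define c0 where "c0 = ln (\<psi> T) + ln 2"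
  have main: "ln (\<psi> t) \<le> c0 + (\<epsilon>/2) * ln t" if t: "t \<ge> T" for t
  proof -
    obtain k0 :: nat where k0': "ln t - ln T < k0 * M"
      using reals_Archimedean3[OF M] by blast
    then have k0: "ln t < ln T + k0 * M" by linarith
    have ex: "\<exists>k. t < \<tau> k"
    proof (rule exI[of _ k0], rule ccontr)
      assume "\<not> t < \<tau> k0"
      then have "ln (\<tau> k0) \<le> ln t" using ind[of k0] T1 by (subst ln_le_cancel_iff) auto
      then show False using ind[of k0] k0 by linarith
    qed
    define k1 where "k1 = (LEAST k. t < \<tau> k)"
    have k1: "t < \<tau> k1" unfolding k1_def by (rule LeastI_ex[OF ex])
    have "k1 \<noteq> 0" proof assume "k1 = 0" then show False using k1 t by (simp add: \<tau>_def) qed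
    then obtain k where kk: "k1 = Suc k" by (cases k1) auto
    have tk: "\<tau> k \<le> t" using not_less_Least[of k "\<lambda>k. t < \<tau> k"] kk unfolding k1_def by auto
    have "ln (\<psi> t) \<le> ln (\<psi> (\<tau> (Suc k)))"
      using psi_mono[OF P, of t "\<tau> (Suc k)"] k1 kk t T1 psi_pos[OF P, of t] by auto
    also have "\<dots> \<le> ln (\<psi> T) + Suc k * ln 2" using ind by blast
    finally have A: "ln (\<psi> t) \<le> c0 + k * ln 2" by (simp add: c0_def algebra_simps)
    have "ln T + k * M \<le> ln (\<tau> k)" using ind by blast
    also have "\<dots> \<le> ln t" using tk ind[of k] T1 by (subst ln_le_cancel_iff) auto
    finally have "k * M \<le> ln t" using T1 by (smt (verit) ln_ge_zero)
    then have "k * ln 2 \<le> (\<epsilon>/2) * ln t" using e unfolding M_def by (simp add: field_simps)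
    then show ?thesis using A by linarith
  qed
  show ?thesis
    using eventually_ge_at_top[of T] eventually_ge_at_top[of "exp (2 * \<bar>c0\<bar> / \<epsilon>)"]
  proof eventually_elim
    case (elim t)
    have "t > 0" using elim(2) by (meson exp_gt_zero less_le_trans)
    then have "ln t \<ge> 2 * \<bar>c0\<bar> / \<epsilon>" using elim(2) by (metis exp_gt_zero ln_exp ln_le_cancel_iff)
    then have "c0 \<le> (\<epsilon>/2) * ln t" using e by (simp add: field_simps)
    then show ?case using main[OF elim(1)] by linarith
  qed
qed


lemma bmeas_sets:
  assumes "bmeas x"
  shows "{s \<in> {0<..}. \<bar>x s\<bar> > l} \<in> sets lebesgue"
proof -
  have m: "(\<lambda>s. indicator {0<..} s *\<^sub>R x s) \<in> borel_measurable lebesgue"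
    using assms unfolding bmeas_def set_borel_measurable_def by auto
  have "{s \<in> {0<..}. \<bar>x s\<bar> > l} = {0<..} \<inter> {s \<in> space lebesgue. \<bar>indicator {0<..} s *\<^sub>R x s\<bar> > l}"
    by (auto simp: indicator_def)
  also have "\<dots> \<in> sets lebesgue"
  proof -
    have m2: "(\<lambda>s. \<bar>indicator {0<..} s *\<^sub>R x s\<bar>) \<in> borel_measurable lebesgue"
      using borel_measurable_abs[OF m] .
    have "{s \<in> space lebesgue. (\<lambda>_. l) s < \<bar>indicator {0<..} s *\<^sub>R x s\<bar>} \<in> sets lebesgue"
      by (rule borel_measurable_less[OF _ m2]) simp
    moreover have "{0::real<..} \<in> sets lebesgue" using borel_open[OF open_greaterThan, of "0::real"] by simp
    ultimately show ?thesis by blast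
  qed
  finally show ?thesis .
qed

lemma bmeas_bound:
  assumes "bmeas x" obtains B where "B \<ge> 0" "\<And>s. s > 0 \<Longrightarrow> \<bar>x s\<bar> \<le> B"
proof -
  have "bounded (x ` {0<..})" using assms unfolding bmeas_def by auto
  then obtain B where B: "\<forall>y\<in>x ` {0<..}. norm y \<le> B" by (auto simp: bounded_iff)
  have "\<bar>x s\<bar> \<le> max B 0" if "s > 0" for s using B that by force
  then show ?thesis using that[of "max B 0"] by simp
qed

lemma distfun_antimono:
  assumes "bmeas x" "l \<le> l'" shows "distfun x l' \<le> distfun x l"
  unfolding distfun_def
proof (rule emeasure_mono)
  show "{s \<in> {0<..}. l' < \<bar>x s\<bar>} \<subseteq> {s \<in> {0<..}. l < \<bar>x s\<bar>}" using assms(2) by auto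
  show "{s \<in> {0<..}. l < \<bar>x s\<bar>} \<in> sets lebesgue" by (rule bmeas_sets[OF assms(1)])
qed

lemma distfun_zero:
  assumes "\<And>s. s > 0 \<Longrightarrow> \<bar>x s\<bar> \<le> B" "B \<le> l" shows "distfun x l = 0"
proof -
  have e: "{s \<in> {0<..}. \<bar>x s\<bar> > l} = {}" using assms by force
  show ?thesis unfolding distfun_def e by simp
qed

lemma distfun_rcont:
  assumes "bmeas x" "\<And>l'. l' > l \<Longrightarrow> distfun x l' \<le> u" shows "distfun x l \<le> u"
proof -
  define A where "A = (\<lambda>k::nat. {s \<in> {0<..}. \<bar>x s\<bar> > l + 1 / Suc k})"
  have r: "range A \<subseteq> sets lebesgue" using bmeas_sets[OF assms(1)] by (auto simp: A_def)
  have inc: "incseq A" unfolding A_def incseq_def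
  proof (intro allI impI subsetI)
    fix m n :: nat and s assume "m \<le> n" "s \<in> {s \<in> {0<..}. \<bar>x s\<bar> > l + 1 / Suc m}"
    moreover have "1 / real (Suc n) \<le> 1 / Suc m" using \<open>m \<le> n\<close> by (simp add: frac_le)
    ultimately show "s \<in> {s \<in> {0<..}. \<bar>x s\<bar> > l + 1 / Suc n}" by auto
  qed
  have U: "(\<Union>k. A k) = {s \<in> {0<..}. \<bar>x s\<bar> > l}"
  proof
    show "(\<Union>k. A k) \<subseteq> {s \<in> {0<..}. \<bar>x s\<bar> > l}" unfolding A_def
    proof (clarsimp)
      fix k :: nat and s :: real assume "l + 1 / (1 + real k) < \<bar>x s\<bar>"
      moreover have "1 / (1 + real k) > 0" by simp
      ultimately show "l < \<bar>x s\<bar>" by linarith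
    qed
    show "{s \<in> {0<..}. \<bar>x s\<bar> > l} \<subseteq> (\<Union>k. A k)"
    proof
      fix s assume s: "s \<in> {s \<in> {0<..}. \<bar>x s\<bar> > l}"
      then obtain k :: nat where k: "1 / Suc k < \<bar>x s\<bar> - l"
        using nat_approx_posE[of "\<bar>x s\<bar> - l"] by auto
      have "s \<in> A k" using k s unfolding A_def by simp
      then show "s \<in> (\<Union>k. A k)" by blast
    qed
  qed
  have "distfun x l = (SUP k. emeasure lebesgue (A k))"
    unfolding distfun_def SUP_emeasure_incseq[OF r inc] U ..
  also have "\<dots> \<le> u"
  proof (rule SUP_least)
    fix k show "emeasure lebesgue (A k) \<le> u" using assms(2)[of "l + 1 / Suc k"]
      unfolding distfun_def A_def by simp
  qed
  finally show ?thesis .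
qed

lemma rearr_props:
  assumes "bmeas x"
  obtains B where "B \<ge> 0" "\<And>t. 0 \<le> rearr x t" "\<And>t. rearr x t \<le> B"
     "\<And>t t'. t \<le> t' \<Longrightarrow> rearr x t' \<le> rearr x t"
     "\<And>t. distfun x (rearr x t) \<le> ennreal t"
proof -
  obtain B where B: "B \<ge> 0" "\<And>s. s > 0 \<Longrightarrow> \<bar>x s\<bar> \<le> B" using bmeas_bound[OF assms] by blast
  define S where "S = (\<lambda>t. {l. 0 \<le> l \<and> distfun x l \<le> ennreal t})"
  have BS: "B \<in> S t" for t using distfun_zero[OF B(2)] B(1) by (auto simp: S_def)
  have bdd: "bdd_below (S t)" for t by (auto simp: S_def bdd_below_def)
  have r: "rearr x t = Inf (S t)" for t by (simp add: rearr_def S_def)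
  have nonneg: "0 \<le> rearr x t" for t unfolding r using BS by (intro cInf_greatest) (auto simp: S_def)
  have le: "rearr x t \<le> B" for t unfolding r by (rule cInf_lower[OF BS bdd])
  have mono: "rearr x t' \<le> rearr x t" if "t \<le> t'" for t t'
    unfolding r
  proof (rule cInf_superset_mono)
    show "S t \<noteq> {}" using BS by auto
    show "bdd_below (S t')" by (rule bdd)
    show "S t \<subseteq> S t'"
    proof
      fix l assume "l \<in> S t"
      then have "0 \<le> l" "distfun x l \<le> ennreal t" by (auto simp: S_def)
      moreover have "ennreal t \<le> ennreal t'" using that by (rule ennreal_leI)
      ultimately show "l \<in> S t'" unfolding S_def by (auto intro: order_trans)
    qed
  qed
  have att: "distfun x (rearr x t) \<le> ennreal t" for t
  proof (rule distfun_rcont[OF assms])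
    fix l' assume "l' > rearr x t"
    then obtain l where l: "l \<in> S t" "l < l'" unfolding r using cInf_less_iff[OF _ bdd] BS by blast
    then have "distfun x l' \<le> distfun x l" by (intro distfun_antimono[OF assms]) auto
    also have "\<dots> \<le> ennreal t" using l by (auto simp: S_def)
    finally show "distfun x l' \<le> ennreal t" .
  qed
  show ?thesis using that[OF B(1) nonneg le mono att] .
qed

lemma rearr_gt:
  assumes "bmeas x" "0 \<le> l" "ennreal v < distfun x l" shows "rearr x v > l"
proof (rule ccontr)
  assume "\<not> rearr x v > l"
  then have "distfun x l \<le> distfun x (rearr x v)" by (intro distfun_antimono[OF assms(1)]) auto
  also have "\<dots> \<le> ennreal v" using rearr_props[OF assms(1)] by metis
  finally show False using assms(3) by simp
qed

lemma rearr_le: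
  assumes "bmeas x" "0 \<le> l" "distfun x l \<le> ennreal v" shows "rearr x v \<le> l"
  unfolding rearr_def by (rule cInf_lower) (use assms in \<open>auto simp: bdd_below_def\<close>)


lemma rearr_meas: assumes "bmeas x" shows "rearr x \<in> borel_measurable borel"
proof -
  have "mono (\<lambda>t. - rearr x t)" unfolding mono_def using rearr_props[OF assms] by (metis neg_le_iff_le)
  then have "(\<lambda>t. - rearr x t) \<in> borel_measurable borel" by (rule borel_measurable_mono)
  then have "(\<lambda>t. - (- rearr x t)) \<in> borel_measurable borel" by measurable
  then show ?thesis by simp
qed

lemma rearr_set_integrable: assumes "bmeas x" "A \<in> sets lborel" "emeasure lborel A < \<infinity>"
  shows "set_integrable lborel A (rearr x)"
proof -
  obtain B where B: "\<And>t. 0 \<le> rearr x t" "\<And>t. rearr x t \<le> B" using rearr_props[OF assms(1)] by metis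
  show ?thesis unfolding set_integrable_def
    by (rule integrableI_bounded_set_indicator[where B=B]) (use assms rearr_meas[OF assms(1)] B in auto)
qed

lemma F_repr:
  assumes bx: "bmeas x" and z: "0 < z" and fin: "distfun x z < \<infinity>"
  shows "stieltjes_tail x z = (LINT v:{0..<enn2real (distfun x z)}|lborel. rearr x v)"
proof -
  define N where "N = enn2real (distfun x z)"
  have nN: "distfun x z = ennreal N" and N0: "N \<ge> 0" using fin by (auto simp: N_def less_top ennreal_enn2real_if)
  define \<Omega> where "\<Omega> = {0::real<..}"
  have \<Omega>: "\<Omega> \<inter> space lebesgue \<in> sets lebesgue" unfolding \<Omega>_def
    using borel_open[OF open_greaterThan, of "0::real"] by simp
  have "(\<lambda>s. indicator {0<..} s *\<^sub>R x s) \<in> borel_measurable lebesgue"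
    using bx unfolding bmeas_def set_borel_measurable_def by auto
  then have "(\<lambda>s. \<bar>indicator {0<..} s *\<^sub>R x s\<bar>) \<in> borel_measurable lebesgue" by (rule borel_measurable_abs)
  moreover have "(\<lambda>s. \<bar>indicator {0<..} s *\<^sub>R x s\<bar>) = (\<lambda>s. indicator \<Omega> s *\<^sub>R \<bar>x s\<bar>)"
    by (auto simp: \<Omega>_def indicator_def)
  ultimately have mx: "(\<lambda>s. \<bar>x s\<bar>) \<in> measurable (restrict_space lebesgue \<Omega>) borel"
    by (subst borel_measurable_restrict_space_iff[OF \<Omega>]) simp
  define \<mu> where "\<mu> = distr (restrict_space lebesgue \<Omega>) borel (\<lambda>s. \<bar>x s\<bar>)"
  have \<mu>I: "emeasure \<mu> {l<..} = distfun x l" for l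
  proof -
    have "emeasure \<mu> {l<..} = emeasure (restrict_space lebesgue \<Omega>) ((\<lambda>s. \<bar>x s\<bar>) -` {l<..} \<inter> space (restrict_space lebesgue \<Omega>))"
      unfolding \<mu>_def by (rule emeasure_distr[OF mx]) simp
    also have "(\<lambda>s. \<bar>x s\<bar>) -` {l<..} \<inter> space (restrict_space lebesgue \<Omega>) = {s \<in> {0<..}. \<bar>x s\<bar> > l}"
      by (auto simp: \<Omega>_def space_restrict_space)
    also have "emeasure (restrict_space lebesgue \<Omega>) \<dots> = distfun x l"
      unfolding distfun_def by (rule emeasure_restrict_space[OF \<Omega>]) (auto simp: \<Omega>_def)
    finally show ?thesis .
  qed
  have sets\<mu>: "sets \<mu> = sets borel" by (simp add: \<mu>_def)
  define \<nu>2 where "\<nu>2 = density \<mu> (indicator {z<..})"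
  define \<nu>1 where "\<nu>1 = distr (density lborel (indicator {0..<N})) borel (rearr x)"
  have distfun_fin: "distfun x l = ennreal (enn2real (distfun x l))" if "l \<ge> z" for l
  proof -
    have "distfun x l \<le> distfun x z" using distfun_antimono[OF bx that] .
    then have "distfun x l < \<infinity>" using fin by (simp add: le_less_trans)
    then show ?thesis by (simp add: less_top ennreal_enn2real_if)
  qed
  have key: "emeasure \<nu>1 {l<..} = (if l < z then distfun x z else distfun x l)" for l
  proof -
    have "emeasure \<nu>1 {l<..} = emeasure (density lborel (indicator {0..<N})) (rearr x -` {l<..} \<inter> space (density lborel (indicator {0..<N})))"
      unfolding \<nu>1_def by (rule emeasure_distr) (auto simp: rearr_meas[OF bx])
    also have "\<dots> = emeasure lborel ({0..<N} \<inter> (rearr x -` {l<..}))"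
      by (subst emeasure_restricted) (auto intro: measurable_sets_borel[OF rearr_meas[OF bx]])
    also have "\<dots> = (if l < z then distfun x z else distfun x l)"
    proof (cases "l < z")
      case True
      have "{0..<N} \<inter> (rearr x -` {l<..}) = {0..<N}"
      proof (intro equalityI subsetI)
        fix v assume v: "v \<in> {0..<N}"
        show "v \<in> {0..<N} \<inter> (rearr x -` {l<..})"
        proof (cases "l < 0")
          case True then show ?thesis using v rearr_props[OF bx] by (metis IntI greaterThan_iff le_less_trans vimageI2 not_le)
        next
          case False
          have "ennreal v < ennreal N" using v by (auto simp: ennreal_less_iff)
          also have "ennreal N \<le> distfun x l" using nN distfun_antimono[OF bx, of l z] True by simp
          finally show ?thesis using rearr_gt[OF bx _ ] False v by auto
        qed
      qed auto
      then show ?thesis using True nN N0 by simp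
    next
      case False
      define Nl where "Nl = enn2real (distfun x l)"
      have dl: "distfun x l = ennreal Nl" using distfun_fin[of l] False by (simp add: Nl_def)
      have l0: "l \<ge> 0" using False z by auto
      have NlN: "Nl \<le> N" using distfun_antimono[OF bx, of z l] False dl nN N0 by simp
      have Nl0: "Nl \<ge> 0" by (simp add: Nl_def)
      have "{0..<N} \<inter> (rearr x -` {l<..}) = {0..<Nl}"
      proof (intro equalityI subsetI)
        fix v assume v: "v \<in> {0..<N} \<inter> (rearr x -` {l<..})"
        show "v \<in> {0..<Nl}"
        proof (rule ccontr)
          assume "v \<notin> {0..<Nl}"
          then have "Nl \<le> v" using v by auto
          then have "distfun x l \<le> ennreal v" using dl by (simp add: ennreal_leI)
          then have "rearr x v \<le> l" by (rule rearr_le[OF bx l0])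
          then show False using v by auto
        qed
      next
        fix v assume v: "v \<in> {0..<Nl}"
        then have "ennreal v < distfun x l" using dl by (auto simp: ennreal_less_iff)
        then have "rearr x v > l" by (rule rearr_gt[OF bx l0])
        then show "v \<in> {0..<N} \<inter> (rearr x -` {l<..})" using v NlN by auto
      qed
      then show ?thesis using False dl Nl0 by simp
    qed
    finally show ?thesis .
  qed
  have key2: "emeasure \<nu>2 {l<..} = (if l < z then distfun x z else distfun x l)" for l
  proof -
    have "emeasure \<nu>2 {l<..} = emeasure \<mu> ({z<..} \<inter> {l<..})"
      unfolding \<nu>2_def by (rule emeasure_restricted) (auto simp: sets\<mu>)
    also have "{z<..} \<inter> {l<..} = (if l < z then {z<..} else {l<..})" by auto
    finally show ?thesis by (simp add: \<mu>I)
  qed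
  have eq: "\<nu>1 = \<nu>2"
  proof (rule measure_eqI_lessThan)
    show "sets \<nu>1 = sets borel" by (simp add: \<nu>1_def)
    show "sets \<nu>2 = sets borel" by (simp add: \<nu>2_def sets\<mu>)
    show "emeasure \<nu>1 {l<..} < \<infinity>" for l
      unfolding key using fin distfun_fin[of l] by (auto simp: less_top[symmetric])
    show "emeasure \<nu>1 {l<..} = emeasure \<nu>2 {l<..}" for l unfolding key key2 ..
  qed
  have "stieltjes_tail x z = integral\<^sup>L \<mu> (\<lambda>l. indicator {z<..} l *\<^sub>R l)"
    unfolding stieltjes_tail_def set_lebesgue_integral_def \<mu>_def \<Omega>_def ..
  also have "\<dots> = integral\<^sup>L \<nu>2 (\<lambda>l. l)"
  proof -
    have d: "density \<mu> (indicator {z<..}) = density \<mu> (\<lambda>l. ennreal (indicator {z<..} l))"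
      by (simp add: ennreal_indicator)
    show ?thesis unfolding \<nu>2_def d
      by (rule integral_density[symmetric]) (auto simp: sets\<mu> measurable_cong_sets[OF sets\<mu>])
  qed
  also have "\<dots> = integral\<^sup>L \<nu>1 (\<lambda>l. l)" unfolding eq ..
  also have "\<dots> = integral\<^sup>L (density lborel (indicator {0..<N})) (rearr x)"
    unfolding \<nu>1_def by (rule integral_distr) (auto simp: rearr_meas[OF bx])
  also have "\<dots> = integral\<^sup>L lborel (\<lambda>v. indicator {0..<N} v *\<^sub>R rearr x v)"
  proof -
    have d: "density lborel (indicator {0..<N}) = density lborel (\<lambda>l. ennreal (indicator {0..<N} l))"
      by (simp add: ennreal_indicator)
    show ?thesis unfolding d by (rule integral_density) (auto simp: rearr_meas[OF bx])
  qed
  finally show ?thesis unfolding set_lebesgue_integral_def N_def .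
qed


lemma smoothing:
  assumes P: "Psi_class \<psi>"
  obtains \<Psi> where
    "\<And>u. u \<ge> 1 \<Longrightarrow> (\<Psi> has_real_derivative ((\<psi> (2*u) - \<psi> u) / u)) (at u)"
    "\<And>u. u \<ge> 1 \<Longrightarrow> \<psi> u / 2 \<le> \<Psi> u \<and> \<Psi> u \<le> \<psi> (2*u)"
proof -
  define h where "h = (\<lambda>v. \<psi> v / v)"
  have hc: "continuous_on {a..b} h" if "a > 0" for a b
  proof -
    have "continuous_on {a..b} \<psi>" by (rule continuous_on_subset[OF psi_cont[OF P]]) (use that in auto)
    then show ?thesis unfolding h_def using that by (intro continuous_intros) auto
  qed
  define G where "G = (\<lambda>u. integral {1/2..u} h)"
  have Gd: "(G has_real_derivative h u) (at u)" if "u > 1/2" for u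
  proof -
    have 1: "(G has_real_derivative h u) (at u within {1/2..u+1})"
      unfolding G_def by (rule integral_has_real_derivative[OF hc]) (use that in auto)
    have "u \<in> interior {1/2..u+1}" using that by (simp add: interior_atLeastAtMost_real)
    then have 2: "at u within {1/2..u+1} = at u" by (rule at_within_interior)
    show ?thesis using 1 unfolding 2 .
  qed
  define \<Psi> where "\<Psi> = (\<lambda>u. G (2*u) - G u)"
  have d: "(\<Psi> has_real_derivative ((\<psi> (2*u) - \<psi> u) / u)) (at u)" if "u \<ge> 1" for u
  proof -
    have "((\<lambda>u. G (2*u)) has_real_derivative h (2*u) * 2) (at u)"
      by (rule DERIV_chain2[OF Gd]) (use that in \<open>auto intro!: derivative_eq_intros\<close>)
    then have "(\<Psi> has_real_derivative (h (2*u) * 2 - h u)) (at u)"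
      unfolding \<Psi>_def using Gd[of u] that by (intro derivative_intros) auto
    moreover have "h (2*u) * 2 - h u = (\<psi> (2*u) - \<psi> u) / u" using that by (simp add: h_def field_simps)
    ultimately show ?thesis by simp
  qed
  have b: "\<psi> u / 2 \<le> \<Psi> u \<and> \<Psi> u \<le> \<psi> (2*u)" if u: "u \<ge> 1" for u
  proof -
    have int: "h integrable_on {a..b}" if "a > 0" for a b using integrable_continuous_real[OF hc[OF that]] .
    have "G u + integral {u..2*u} h = G (2*u)"
      unfolding G_def by (rule Henstock_Kurzweil_Integration.integral_combine) (use u int[of "1/2"] in auto)
    then have eq: "\<Psi> u = integral {u..2*u} h" by (simp add: \<Psi>_def)
    have upos: "u > 0" using u by simp
    have lo: "integral {u..2*u} (\<lambda>v. \<psi> u / (2*u)) \<le> integral {u..2*u} h"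
    proof (rule integral_le)
      show "h integrable_on {u..2*u}" using int upos by auto
      show "(\<lambda>v. \<psi> u / (2*u)) integrable_on {u..2*u}" by (rule integrable_const_ivl)
      fix v assume v: "v \<in> {u..2*u}"
      have "\<psi> u \<le> \<psi> v" using psi_mono[OF P] v upos by auto
      moreover have "\<psi> u \<ge> 0" using psi_pos[OF P upos] by simp
      ultimately have a: "\<psi> u / (2*u) \<le> \<psi> v / (2*u)" "\<psi> v \<ge> 0" using upos
        by (auto simp: divide_right_mono)
      have b: "\<psi> v / (2*u) \<le> \<psi> v / v" using v upos a(2) by (intro divide_left_mono) auto
      show "\<psi> u / (2*u) \<le> h v" unfolding h_def using a b by linarith
    qed
    have c1: "integral {u..2*u} (\<lambda>v. \<psi> u / (2*u)) = \<psi> u / 2" using upos by (simp add: content_real)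
    have hi: "integral {u..2*u} h \<le> integral {u..2*u} (\<lambda>v. \<psi> (2*u) / u)"
    proof (rule integral_le)
      show "h integrable_on {u..2*u}" using int upos by auto
      show "(\<lambda>v. \<psi> (2*u) / u) integrable_on {u..2*u}" by (rule integrable_const_ivl)
      fix v assume v: "v \<in> {u..2*u}"
      have "\<psi> v \<le> \<psi> (2*u)" using psi_mono[OF P] v upos by auto
      moreover have "\<psi> v \<ge> 0" using psi_pos[OF P, of v] v upos by simp
      ultimately show "h v \<le> \<psi> (2*u) / u" unfolding h_def using v upos
        by (auto simp: field_simps intro: mult_mono)
    qed
    have c2: "integral {u..2*u} (\<lambda>v. \<psi> (2*u) / u) = \<psi> (2*u)" using upos by (simp add: content_real)
    show ?thesis using lo hi unfolding c1 c2 eq by simp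
  qed
  show ?thesis using that[OF d b] by blast
qed


lemma nn_log_int:
  assumes "0 < a" "a \<le> b" "0 \<le> c"
  shows "(\<integral>\<^sup>+x. ennreal (c / x) * indicator {a..b} x \<partial>lborel) = ennreal (c * (ln b - ln a))"
proof -
  have "(\<integral>\<^sup>+x. ennreal (c / x) * indicator {a..b} x \<partial>lborel) = ennreal (c * ln b - c * ln a)"
  proof (rule nn_integral_FTC_Icc)
    show "(\<lambda>x. c / x) \<in> borel_measurable borel" by measurable
    fix x assume x: "x \<in> {a..b}"
    then have "x > 0" using assms by auto
    then show "((\<lambda>x. c * ln x) has_real_derivative c / x) (at x)"
      by (auto intro!: derivative_eq_intros)
    show "0 \<le> c / x" using assms x by auto
  qed (use assms in auto)
  then show ?thesis by (simp add: algebra_simps)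
qed

lemma transport:
  fixes s s' Y :: "real \<Rightarrow> real"
  assumes ab: "0 < a" "a < b"
    and deriv: "\<And>x. x \<in> {a..b} \<Longrightarrow> (s has_real_derivative s' x) (at x)"
    and cont: "continuous_on {a..b} s'"
    and spos: "\<And>x. x \<in> {a..b} \<Longrightarrow> s x > 0"
    and sge: "\<And>x. x \<in> {a..b} \<Longrightarrow> s' x \<ge> s x / x"
    and Y: "Y \<in> borel_measurable borel" "\<And>y. Y y \<ge> 0"
  shows "(\<integral>\<^sup>+x. ennreal (Y (s x) / x) * indicator {a..b} x \<partial>lborel)
       \<le> (\<integral>\<^sup>+y. ennreal (Y y / y) * indicator {s a..s b} y \<partial>lborel)"
proof -
  have s'0: "s' x \<ge> 0" if "x \<in> {a..b}" for x
    using sge[OF that] spos[OF that] that ab by (smt (verit) divide_pos_pos atLeastAtMost_iff)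
  have "(\<integral>\<^sup>+y. ennreal (Y y / y) * indicator {s a..s b} y \<partial>lborel)
      = (\<integral>\<^sup>+x. ennreal (Y (s x) / s x) * s' x * indicator {a..b} x \<partial>lborel)"
    by (rule nn_integral_substitution_aux[where f = "\<lambda>y. ennreal (Y y / y)"])
       (use ab deriv cont s'0 Y in auto)
  also have "\<dots> \<ge> (\<integral>\<^sup>+x. ennreal (Y (s x) / x) * indicator {a..b} x \<partial>lborel)"
  proof (rule nn_integral_mono)
    fix x show "ennreal (Y (s x) / x) * indicator {a..b} x \<le> ennreal (Y (s x) / s x) * s' x * indicator {a..b} x"
    proof (cases "x \<in> {a..b}")
      case True
      have x0: "x > 0" using True ab by auto
      have sx: "s x > 0" by (rule spos[OF True])
      have "Y (s x) / x = (Y (s x) / s x) * (s x / x)" using sx by simp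
      also have "\<dots> \<le> (Y (s x) / s x) * s' x"
        using sge[OF True] Y(2)[of "s x"] sx by (intro mult_left_mono) auto
      finally have le: "Y (s x) / x \<le> (Y (s x) / s x) * s' x" .
      have "ennreal (Y (s x) / x) \<le> ennreal ((Y (s x) / s x) * s' x)" using le by (rule ennreal_leI)
      also have "\<dots> = ennreal (Y (s x) / s x) * s' x"
        using Y(2)[of "s x"] sx s'0[OF True] by (intro ennreal_mult) auto
      finally show ?thesis using True by simp
    qed simp
  qed
  finally show ?thesis .
qed


lemma lborel_Icc_fin: "emeasure lborel {a..b::real} < top"
  by (cases "a \<le> b") auto
lemma lborel_Ico_fin: "emeasure lborel {a..<b::real} < top"
proof -
  have "emeasure lborel {a..<b} \<le> emeasure lborel {a..b}" by (rule emeasure_mono) auto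
  then show ?thesis using lborel_Icc_fin[of a b] by (simp add: le_less_trans)
qed

lemma rearr_int_Icc: "bmeas x \<Longrightarrow> set_integrable lborel {a..b} (rearr x)"
  by (rule rearr_set_integrable) (auto intro: lborel_Icc_fin)
lemma rearr_int_Ico: "bmeas x \<Longrightarrow> set_integrable lborel {a..<b} (rearr x)"
  by (rule rearr_set_integrable) (auto intro: lborel_Ico_fin)

lemma rearr_int_mono:
  assumes bx: "bmeas x" and "set_integrable lborel A (rearr x)" "set_integrable lborel B (rearr x)" "A \<subseteq> B"
  shows "(LINT v:A|lborel. rearr x v) \<le> (LINT v:B|lborel. rearr x v)"
  unfolding set_lebesgue_integral_def
proof (rule integral_mono)
  show "integrable lborel (\<lambda>v. indicator A v *\<^sub>R rearr x v)" using assms(2) by (simp add: set_integrable_def)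
  show "integrable lborel (\<lambda>v. indicator B v *\<^sub>R rearr x v)" using assms(3) by (simp add: set_integrable_def)
  fix v show "indicator A v *\<^sub>R rearr x v \<le> indicator B v *\<^sub>R rearr x v"
    using rearr_props[OF bx] assms(4) by (auto simp: indicator_def)
qed

lemma rearr_int_nonneg: "bmeas x \<Longrightarrow> 0 \<le> (LINT v:A|lborel. rearr x v)"
  unfolding set_lebesgue_integral_def by (rule Bochner_Integration.integral_nonneg) (use rearr_props in \<open>auto simp: indicator_def\<close>)

lemma f_mono: "bmeas x \<Longrightarrow> a \<le> b \<Longrightarrow> (LINT v:{0..a}|lborel. rearr x v) \<le> (LINT v:{0..b}|lborel. rearr x v)"
  by (rule rearr_int_mono) (auto intro: rearr_int_Icc)

lemma f_lower:
  assumes bx: "bmeas x" and l: "0 \<le> l" and s: "0 \<le> s" and d: "ennreal s < distfun x l"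
  shows "l * s \<le> (LINT v:{0..s}|lborel. rearr x v)"
proof -
  have "(LINT v:{0..s}|lborel. l) = l * s"
    using s by (subst set_integral_const) auto
  moreover have "(LINT v:{0..s}|lborel. l) \<le> (LINT v:{0..s}|lborel. rearr x v)"
  proof (rule set_integral_mono)
    show "set_integrable lborel {0..s} (\<lambda>v. l)" unfolding set_integrable_def
      by (intro integrable_scaleR_left integrable_real_indicator) (auto intro: lborel_Icc_fin)
    show "set_integrable lborel {0..s} (rearr x)" by (rule rearr_int_Icc[OF bx])
    fix v assume v: "v \<in> {0..s}"
    have "ennreal v \<le> ennreal s" using v by (auto intro: ennreal_leI)
    then have "ennreal v < distfun x l" using d by (rule le_less_trans)
    then show "l \<le> rearr x v" using rearr_gt[OF bx l] by (simp add: less_imp_le)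
  qed
  ultimately show ?thesis by simp
qed

lemma F_le:
  assumes bx: "bmeas x" and z: "0 < z" and m: "0 \<le> m" and d: "distfun x z \<le> ennreal m"
  shows "stieltjes_tail x z \<le> (LINT v:{0..m}|lborel. rearr x v)" "0 \<le> stieltjes_tail x z"
proof -
  have fin: "distfun x z < \<infinity>" using d by (simp add: le_less_trans)
  have e: "distfun x z = ennreal (enn2real (distfun x z))" using fin by (simp add: less_top ennreal_enn2real_if)
  have N: "enn2real (distfun x z) \<le> m" using d m by (subst (asm) e) (simp add: ennreal_le_iff)
  show "stieltjes_tail x z \<le> (LINT v:{0..m}|lborel. rearr x v)"
    unfolding F_repr[OF bx z fin] using N
    by (intro rearr_int_mono[OF bx rearr_int_Ico[OF bx] rearr_int_Icc[OF bx]]) auto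
  show "0 \<le> stieltjes_tail x z" unfolding F_repr[OF bx z fin] by (rule rearr_int_nonneg[OF bx])
qed

lemma F_mono:
  assumes bx: "bmeas x" and z: "0 < z" "z \<le> z'" and fin: "distfun x z < \<infinity>"
  shows "stieltjes_tail x z' \<le> stieltjes_tail x z"
proof -
  have d': "distfun x z' \<le> distfun x z" by (rule distfun_antimono[OF bx z(2)])
  then have fin': "distfun x z' < \<infinity>" using fin by (simp add: le_less_trans)
  have "enn2real (distfun x z') \<le> enn2real (distfun x z)" using d' fin by (simp add: enn2real_mono)
  moreover have z': "0 < z'" using z by simp
  ultimately show ?thesis unfolding F_repr[OF bx z(1) fin] F_repr[OF bx z' fin']
    by (intro rearr_int_mono[OF bx rearr_int_Ico[OF bx] rearr_int_Ico[OF bx]]) auto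
qed


lemma Mmean_cong: assumes "\<And>s. 1 \<le> s \<Longrightarrow> y s = y' s" shows "Mmean y = Mmean y'"
proof
  fix t
  have "(\<lambda>s. indicator {1..t} s *\<^sub>R (y s / s)) = (\<lambda>s. indicator {1..t} s *\<^sub>R (y' s / s))"
    using assms by (auto simp: indicator_def)
  then show "Mmean y t = Mmean y' t" unfolding Mmean_def set_lebesgue_integral_def by simp
qed

lemma bmeas_of_borel:
  assumes "f \<in> borel_measurable borel" "\<And>t. \<bar>f t\<bar> \<le> B" shows "bmeas f"
  unfolding bmeas_def set_borel_measurable_def
proof
  have "(\<lambda>t. indicator {0<..} t *\<^sub>R f t) \<in> borel_measurable borel" using assms(1) by measurable
  then have "(\<lambda>t. indicator {0<..} t *\<^sub>R f t) \<in> borel_measurable lborel"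
    by (simp add: measurable_lborel1)
  then show "(\<lambda>t. indicator {0<..} t *\<^sub>R f t) \<in> borel_measurable lebesgue"
    by (rule measurable_completion)
  show "bounded (f ` {0<..})" unfolding bounded_iff using assms(2) by auto
qed

lemma Mmean_props:
  fixes y :: "real \<Rightarrow> real"
  assumes ym: "y \<in> borel_measurable borel" and yb: "\<And>s. 1 \<le> s \<Longrightarrow> 0 \<le> y s \<and> y s \<le> B"
  shows "bmeas (Mmean y)" "\<And>t. 0 \<le> Mmean y t" "\<And>t. Mmean y t \<le> B"
proof -
  have B0: "0 \<le> B" using yb[of 1] by auto
  define g where "g = (\<lambda>t. LINT s:{1..t}|lborel. y s / s)"
  have M: "Mmean y = (\<lambda>t. if 1 < t then (1 / ln t) * g t else 0)"
    by (simp add: Mmean_def g_def fun_eq_iff)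
  have int: "set_integrable lborel {1..t} (\<lambda>s. y s / s)" for t
    unfolding set_integrable_def
  proof (rule integrableI_bounded_set_indicator[where B=B])
    show "{1..t} \<in> sets lborel" by simp
    show "(\<lambda>s. y s / s) \<in> borel_measurable lborel" using ym by (simp add: measurable_lborel1)
    show "emeasure lborel {1..t} < \<infinity>" using lborel_Icc_fin by simp
    show "AE s in lborel. s \<in> {1..t} \<longrightarrow> norm (y s / s) \<le> B"
    proof (rule AE_I2, clarify)
      fix s assume s: "s \<in> {1..t}"
      have "y s / s \<le> y s / 1" using s yb[of s] by (intro divide_left_mono) auto
      then show "norm (y s / s) \<le> B" using s yb[of s] by auto
    qed
  qed
  have g0: "0 \<le> g t" for t unfolding g_def set_lebesgue_integral_def
    by (rule Bochner_Integration.integral_nonneg) (use yb in \<open>auto simp: indicator_def\<close>)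
  have gB: "g t \<le> B * ln t" if "1 \<le> t" for t
  proof -
    have D: "((\<lambda>s. B * ln s) has_real_derivative B / s) (at s)" if "s \<in> {1..t}" for s
      using that by (auto intro!: derivative_eq_intros)
    have I: "integrable lborel (\<lambda>s. B / s * indicator {1..t} s)"
      by (rule integrable_FTC_Icc_nonneg[OF _ D]) (use that B0 in auto)
    have E: "(\<integral>s. B / s * indicator {1..t} s \<partial>lborel) = B * ln t - B * ln 1"
      by (rule integral_FTC_Icc_nonneg[OF _ D]) (use that B0 in auto)
    have "g t \<le> (LINT s:{1..t}|lborel. B / s)" unfolding g_def
    proof (rule set_integral_mono[OF int])
      show "set_integrable lborel {1..t} (\<lambda>s. B / s)"
        using I unfolding set_integrable_def by (simp add: mult.commute)
      fix s assume s: "s \<in> {1..t}" then show "y s / s \<le> B / s" using yb[of s] by (auto intro: divide_right_mono)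
    qed
    also have "(LINT s:{1..t}|lborel. B / s) = B * ln t - B * ln 1"
      unfolding set_lebesgue_integral_def using E by (simp add: mult.commute)
    finally show ?thesis by simp
  qed
  show nn: "0 \<le> Mmean y t" for t unfolding M using g0[of t] by auto
  show le: "Mmean y t \<le> B" for t
  proof (cases "1 < t")
    case True
    then have "(1 / ln t) * g t \<le> (1 / ln t) * (B * ln t)" using gB[of t] by (intro mult_left_mono) auto
    then show ?thesis unfolding M using True by simp
  qed (use B0 M in auto)
  have gm: "g \<in> borel_measurable borel"
  proof -
    have "(\<lambda>t. integral\<^sup>L lborel (\<lambda>s. (\<lambda>(t,s). indicator {1..t} s *\<^sub>R (y s / s)) (t, s))) \<in> borel_measurable borel"
    proof (rule lborel.borel_measurable_lebesgue_integral)
      define F2 where "F2 = (\<lambda>(t::real,s::real). indicator {1..t} s *\<^sub>R (y s / s))"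
      have "F2 = (\<lambda>p::real\<times>real. if 1 \<le> snd p \<and> snd p \<le> fst p then y (snd p) / snd p else 0)"
        by (auto simp: fun_eq_iff indicator_def F2_def)
      moreover have "(\<lambda>p::real\<times>real. if 1 \<le> snd p \<and> snd p \<le> fst p then y (snd p) / snd p else 0) \<in> borel_measurable (borel \<Otimes>\<^sub>M lborel)"
        using ym by measurable
      ultimately have "F2 \<in> borel_measurable (borel \<Otimes>\<^sub>M lborel)" by simp
      then show "case_prod (\<lambda>t s. (\<lambda>(t,s). indicator {1..t} s *\<^sub>R (y s / s)) (t, s)) \<in> borel_measurable (borel \<Otimes>\<^sub>M lborel)"
        unfolding F2_def case_prod_eta .
    qed
    then show ?thesis by (simp add: g_def set_lebesgue_integral_def)
  qed
  have "Mmean y \<in> borel_measurable borel" unfolding M using gm by measurable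
  then show "bmeas (Mmean y)" by (rule bmeas_of_borel[where B=B]) (use nn le in auto)
qed

lemma bmeas_add: "bmeas a \<Longrightarrow> bmeas b \<Longrightarrow> bmeas (\<lambda>t. a t + b t)"
  unfolding bmeas_def set_borel_measurable_def
proof (elim conjE, intro conjI)
  assume "(\<lambda>x. indicator {0<..} x *\<^sub>R a x) \<in> borel_measurable lebesgue"
    "(\<lambda>x. indicator {0<..} x *\<^sub>R b x) \<in> borel_measurable lebesgue"
  then have "(\<lambda>x. indicator {0<..} x *\<^sub>R a x + indicator {0<..} x *\<^sub>R b x) \<in> borel_measurable lebesgue" by measurable
  then show "(\<lambda>x. indicator {0<..} x *\<^sub>R (a x + b x)) \<in> borel_measurable lebesgue" by (simp add: algebra_simps)
  assume "bounded (a ` {0<..})" "bounded (b ` {0<..})"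
  then obtain A B where "\<forall>t\<in>{0<..}. norm (a t) \<le> A" "\<forall>t\<in>{0<..}. norm (b t) \<le> B" by (auto simp: bounded_iff)
  then show "bounded ((\<lambda>t. a t + b t) ` {0<..})" unfolding bounded_iff
    by (intro exI[of _ "A + B"]) (auto intro: order_trans[OF abs_triangle_ineq] add_mono)
qed

lemma bmeas_cmult: "bmeas a \<Longrightarrow> bmeas (\<lambda>t. c * a t)"
  unfolding bmeas_def set_borel_measurable_def
proof (elim conjE, intro conjI)
  assume "(\<lambda>x. indicator {0<..} x *\<^sub>R a x) \<in> borel_measurable lebesgue"
  then have "(\<lambda>x. c * (indicator {0<..} x *\<^sub>R a x)) \<in> borel_measurable lebesgue" by measurable
  then show "(\<lambda>x. indicator {0<..} x *\<^sub>R (c * a x)) \<in> borel_measurable lebesgue" by (simp add: algebra_simps)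
  assume "bounded (a ` {0<..})"
  then obtain A where "\<forall>t\<in>{0<..}. norm (a t) \<le> A" by (auto simp: bounded_iff)
  then show "bounded ((\<lambda>t. c * a t) ` {0<..})" unfolding bounded_iff
    by (intro exI[of _ "\<bar>c\<bar> * A"]) (auto simp: abs_mult intro: mult_left_mono)
qed

lemma bmeas_max0: "bmeas a \<Longrightarrow> bmeas (\<lambda>t. max 0 (a t))"
  unfolding bmeas_def set_borel_measurable_def
proof (elim conjE, intro conjI)
  assume "(\<lambda>x. indicator {0<..} x *\<^sub>R a x) \<in> borel_measurable lebesgue"
  then have "(\<lambda>x. max 0 (indicator {0<..} x *\<^sub>R a x)) \<in> borel_measurable lebesgue" by measurable
  moreover have "(\<lambda>x. max 0 (indicator {0<..} x *\<^sub>R a x)) = (\<lambda>x. indicator {0<..} x *\<^sub>R max 0 (a x))"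
    by (auto simp: indicator_def fun_eq_iff)
  ultimately show "(\<lambda>x. indicator {0<..} x *\<^sub>R max 0 (a x)) \<in> borel_measurable lebesgue" by simp
  assume "bounded (a ` {0<..})"
  then obtain A where "\<forall>t\<in>{0<..}. norm (a t) \<le> A" by (auto simp: bounded_iff)
  moreover have "\<bar>max 0 (a t)\<bar> \<le> \<bar>a t\<bar>" for t by auto
  ultimately show "bounded ((\<lambda>t. max 0 (a t)) ` {0<..})" unfolding bounded_iff
    by (intro exI[of _ "A"]) (auto intro: order_trans)
qed

lemma gamma_le:
  assumes g: "generalised_limit \<gamma>" and a: "bmeas a" and b: "bmeas b" and d: "bmeas d"
    and dl: "(d \<longlongrightarrow> 0) at_top" and le: "\<And>t. a t \<le> b t + d t"
  shows "\<gamma> a \<le> \<gamma> b"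
proof -
  have add: "\<And>y z. bmeas y \<Longrightarrow> bmeas z \<Longrightarrow> \<gamma> (\<lambda>t. y t + z t) = \<gamma> y + \<gamma> z"
    and mul: "\<And>y c. bmeas y \<Longrightarrow> \<gamma> (\<lambda>t. c * y t) = c * \<gamma> y"
    and pos: "\<And>y. bmeas y \<Longrightarrow> (AE t in lebesgue. t > 0 \<longrightarrow> 0 \<le> y t) \<Longrightarrow> 0 \<le> \<gamma> y"
    and lim: "\<And>y. bmeas y \<Longrightarrow> (y \<longlongrightarrow> 0) at_top \<Longrightarrow> \<gamma> y = 0"
    using g unfolding generalised_limit_def by blast+
  have bd: "bmeas (\<lambda>t. b t + d t)" using b d by (rule bmeas_add)
  have ma: "bmeas (\<lambda>t. (-1) * a t)" using a by (rule bmeas_cmult)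
  have w: "bmeas (\<lambda>t. (b t + d t) + (-1) * a t)" using bd ma by (rule bmeas_add)
  have "0 \<le> \<gamma> (\<lambda>t. (b t + d t) + (-1) * a t)"
    by (rule pos[OF w]) (use le in \<open>auto intro: AE_I2 simp: algebra_simps\<close>)
  also have "\<gamma> (\<lambda>t. (b t + d t) + (-1) * a t) = \<gamma> b + \<gamma> d - \<gamma> a"
    using add[OF bd ma] add[OF b d] mul[OF a, of "-1"] by simp
  finally show ?thesis using lim[OF d dl] by simp
qed


lemma conv:
  fixes h :: "real \<Rightarrow> real"
  assumes hm: "h \<in> borel_measurable borel" and h0: "\<And>u. 0 \<le> h u" and hC: "\<And>u. h u \<le> C" and a: "0 < a"
  shows "(\<integral>\<^sup>+u. ennreal (h u / u) * indicator {a..b} u \<partial>lborel) = ennreal (LINT u:{a..b}|lborel. h u / u)"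
proof -
  have int: "integrable lborel (\<lambda>u. indicator {a..b} u *\<^sub>R (h u / u))"
  proof (rule integrableI_bounded_set_indicator[where B="C / a"])
    show "(\<lambda>u. h u / u) \<in> borel_measurable lborel" using hm by (simp add: measurable_lborel1)
    show "emeasure lborel {a..b} < \<infinity>" using lborel_Icc_fin by simp
    show "AE u in lborel. u \<in> {a..b} \<longrightarrow> norm (h u / u) \<le> C / a"
    proof (rule AE_I2, clarify)
      fix u assume u: "u \<in> {a..b}"
      then have u0: "u > 0" using a by auto
      have "h u / u \<le> C / u" using hC[of u] u0 by (simp add: divide_right_mono)
      also have "C / u \<le> C / a" using u a h0[of u] hC[of u] by (intro divide_left_mono) auto
      finally show "norm (h u / u) \<le> C / a" using h0[of u] u0 by simp
    qed
  qed simp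
  have "(\<integral>\<^sup>+u. ennreal (h u / u) * indicator {a..b} u \<partial>lborel) = (\<integral>\<^sup>+u. ennreal (indicator {a..b} u *\<^sub>R (h u / u)) \<partial>lborel)"
    by (rule nn_integral_cong) (auto simp: indicator_def)
  also have "\<dots> = ennreal (integral\<^sup>L lborel (\<lambda>u. indicator {a..b} u *\<^sub>R (h u / u)))"
    by (rule nn_integral_eq_integral[OF int]) (use h0 a in \<open>auto simp: indicator_def intro!: AE_I2\<close>)
  finally show ?thesis by (simp add: set_lebesgue_integral_def)
qed

lemma compare:
  fixes Y1 Y2 s s' :: "real \<Rightarrow> real"
  assumes T: "1 \<le> T" "T < t"
    and Y1m: "Y1 \<in> borel_measurable borel" and Y2m: "Y2 \<in> borel_measurable borel"
    and Y1b: "\<And>u. 0 \<le> Y1 u \<and> Y1 u \<le> B1" and Y2b: "\<And>u. 0 \<le> Y2 u \<and> Y2 u \<le> C"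
    and e: "0 \<le> \<epsilon>"
    and key: "\<And>u. u \<in> {T..t} \<Longrightarrow> Y1 u \<le> (1+\<epsilon>) * Y2 (s u)"
    and sge: "\<And>u. u \<in> {T..t} \<Longrightarrow> u \<le> s u"
    and deriv: "\<And>u. u \<in> {T..t} \<Longrightarrow> (s has_real_derivative s' u) (at u)"
    and cont: "continuous_on {T..t} s'"
    and s'ge: "\<And>u. u \<in> {T..t} \<Longrightarrow> s' u \<ge> s u / u"
  shows "(LINT u:{1..t}|lborel. Y1 u / u)
     \<le> B1 * ln T + (1+\<epsilon>) * (LINT u:{1..t}|lborel. Y2 u / u) + (1+\<epsilon>) * C * (ln (s t) - ln t)"
proof -
  define Z where "Z = (\<lambda>v. (1+\<epsilon>) * Y2 v)"
  have B10: "0 \<le> B1" using Y1b[of 0] by auto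
  have C0: "0 \<le> C" using Y2b[of 0] by auto
  have Zm: "Z \<in> borel_measurable borel" using Y2m unfolding Z_def by measurable
  have Zb: "0 \<le> Z v" "Z v \<le> (1+\<epsilon>) * C" for v using Y2b[of v] e unfolding Z_def by (auto intro: mult_left_mono)
  have sT: "T \<le> s T" and st: "t \<le> s t" using sge T by auto
  have I1: "(\<integral>\<^sup>+u. ennreal (Y1 u / u) * indicator {1..t} u \<partial>lborel) = ennreal (LINT u:{1..t}|lborel. Y1 u / u)"
    by (rule conv[OF Y1m]) (use Y1b in auto)
  have "(\<integral>\<^sup>+u. ennreal (Y1 u / u) * indicator {1..t} u \<partial>lborel)
      \<le> (\<integral>\<^sup>+u. ennreal (B1 / u) * indicator {1..T} u + ennreal (Y1 u / u) * indicator {T..t} u \<partial>lborel)"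
  proof (rule nn_integral_mono)
    fix u show "ennreal (Y1 u / u) * indicator {1..t} u \<le> ennreal (B1 / u) * indicator {1..T} u + ennreal (Y1 u / u) * indicator {T..t} u"
    proof (cases "u \<in> {1..t}")
      case True
      show ?thesis
      proof (cases "u \<le> T")
        case True
        have "Y1 u / u \<le> B1 / u" using Y1b[of u] \<open>u \<in> {1..t}\<close> by (auto intro: divide_right_mono)
        then have "ennreal (Y1 u / u) \<le> ennreal (B1 / u)" by (rule ennreal_leI)
        then show ?thesis using True \<open>u \<in> {1..t}\<close> by (auto simp: indicator_def intro: add_increasing2)
      next
        case False then show ?thesis using \<open>u \<in> {1..t}\<close> by (auto simp: indicator_def)
      qed
    qed simp
  qed
  also have "\<dots> = (\<integral>\<^sup>+u. ennreal (B1 / u) * indicator {1..T} u \<partial>lborel) + (\<integral>\<^sup>+u. ennreal (Y1 u / u) * indicator {T..t} u \<partial>lborel)"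
    by (rule nn_integral_add) (use Y1m in auto)
  also have "(\<integral>\<^sup>+u. ennreal (B1 / u) * indicator {1..T} u \<partial>lborel) = ennreal (B1 * (ln T - ln 1))"
    by (rule nn_log_int) (use T B10 in auto)
  also have "(\<integral>\<^sup>+u. ennreal (Y1 u / u) * indicator {T..t} u \<partial>lborel) \<le> (\<integral>\<^sup>+u. ennreal (Z (s u) / u) * indicator {T..t} u \<partial>lborel)"
  proof (rule nn_integral_mono)
    fix u show "ennreal (Y1 u / u) * indicator {T..t} u \<le> ennreal (Z (s u) / u) * indicator {T..t} u"
    proof (cases "u \<in> {T..t}")
      case True
      then have "Y1 u / u \<le> Z (s u) / u" using key[OF True] T unfolding Z_def by (auto intro: divide_right_mono)
      then show ?thesis using True by (auto intro: ennreal_leI)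
    qed simp
  qed
  also have "\<dots> \<le> (\<integral>\<^sup>+v. ennreal (Z v / v) * indicator {s T..s t} v \<partial>lborel)"
  proof (rule transport[OF _ _ deriv cont _ s'ge Zm Zb(1)])
    fix u assume u: "u \<in> {T..t}"
    then have "u \<le> s u" by (rule sge)
    then show "0 < s u" using u T by auto
  qed (use T in auto)
  also have "\<dots> \<le> (\<integral>\<^sup>+v. ennreal (Z v / v) * indicator {1..t} v + ennreal ((1+\<epsilon>) * C / v) * indicator {t..s t} v \<partial>lborel)"
  proof (rule nn_integral_mono)
    fix v show "ennreal (Z v / v) * indicator {s T..s t} v \<le> ennreal (Z v / v) * indicator {1..t} v + ennreal ((1+\<epsilon>) * C / v) * indicator {t..s t} v"
    proof (cases "v \<in> {s T..s t}")
      case True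
      then have v1: "1 \<le> v" using sT T by auto
      show ?thesis
      proof (cases "v \<le> t")
        case True then show ?thesis using v1 by (auto simp: indicator_def intro: add_increasing2)
      next
        case False
        have "Z v / v \<le> (1+\<epsilon>) * C / v" using Zb[of v] v1 by (auto intro: divide_right_mono)
        then have "ennreal (Z v / v) \<le> ennreal ((1+\<epsilon>) * C / v)" by (rule ennreal_leI)
        then show ?thesis using False True by (auto simp: indicator_def)
      qed
    qed simp
  qed
  also have "\<dots> = (\<integral>\<^sup>+v. ennreal (Z v / v) * indicator {1..t} v \<partial>lborel) + (\<integral>\<^sup>+v. ennreal ((1+\<epsilon>) * C / v) * indicator {t..s t} v \<partial>lborel)"
    by (rule nn_integral_add) (use Zm in auto)
  also have "(\<integral>\<^sup>+v. ennreal (Z v / v) * indicator {1..t} v \<partial>lborel) = ennreal (LINT v:{1..t}|lborel. Z v / v)"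
    by (rule conv[OF Zm Zb]) simp
  also have "(\<integral>\<^sup>+v. ennreal ((1+\<epsilon>) * C / v) * indicator {t..s t} v \<partial>lborel) = ennreal ((1+\<epsilon>) * C * (ln (s t) - ln t))"
    by (rule nn_log_int) (use T st e C0 in auto)
  finally have ineq: "ennreal (LINT u:{1..t}|lborel. Y1 u / u)
     \<le> ennreal (B1 * (ln T - ln 1)) + (ennreal (LINT v:{1..t}|lborel. Z v / v) + ennreal ((1+\<epsilon>) * C * (ln (s t) - ln t)))"
    unfolding I1 by (simp add: add_mono)
  have nnZ: "0 \<le> (LINT v:{1..t}|lborel. Z v / v)"
    unfolding set_lebesgue_integral_def by (rule Bochner_Integration.integral_nonneg) (use Zb in \<open>auto simp: indicator_def\<close>)
  have nnR: "0 \<le> (1+\<epsilon>) * C * (ln (s t) - ln t)" using e C0 st T by (auto intro!: mult_nonneg_nonneg)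
  have nnB: "0 \<le> B1 * (ln T - ln 1)" using B10 T by auto
  have "(LINT u:{1..t}|lborel. Y1 u / u) \<le> B1 * (ln T - ln 1) + ((LINT v:{1..t}|lborel. Z v / v) + (1+\<epsilon>) * C * (ln (s t) - ln t))"
    using ineq nnZ nnR nnB by (simp add: ennreal_plus[symmetric] del: ennreal_plus)
  moreover have "(LINT v:{1..t}|lborel. Z v / v) = (1+\<epsilon>) * (LINT v:{1..t}|lborel. Y2 v / v)"
    unfolding Z_def times_divide_eq_right[symmetric] by (rule set_integral_mult_right)
  ultimately show ?thesis by simp
qed


lemma keyA:
  assumes P: "Psi_class \<psi>" and H: "((\<lambda>t. \<psi> (t * \<psi> t) / \<psi> t) \<longlongrightarrow> 1) at_top"
    and bx: "bmeas x" and C1: "1 \<le> C1"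
    and f_def: "f = (\<lambda>t. LINT v:{0..t}|lborel. rearr x v)"
    and fb: "\<And>t. 0 < t \<Longrightarrow> f t \<le> C1 * \<psi> t"
    and \<Psi>b: "\<And>u. u \<ge> 1 \<Longrightarrow> \<psi> u / 2 \<le> \<Psi> u \<and> \<Psi> u \<le> \<psi> (2*u)"
    and K: "K = 8 * C1" and s_def: "s = (\<lambda>u. K * u * \<Psi> u)"
    and e: "0 < \<epsilon>" "\<epsilon> \<le> 1"
  shows "eventually (\<lambda>u. 1 \<le> u \<and> (1 / \<psi> u) * stieltjes_tail x (1/u) \<le> (1+\<epsilon>) * ((1 / \<psi> (s u)) * f (s u))
      \<and> u \<le> s u \<and> s u \<le> 2*K*u*\<psi> u \<and> distfun x (1/u) < \<infinity>) at_top"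
proof -
  have K0: "K > 0" "K \<ge> 8" using C1 K by auto
  have ev: "eventually (\<lambda>u. \<psi> (2*u) \<le> 2 * \<psi> u \<and> \<psi> ((2*K) * (u * \<psi> u)) \<le> (1+\<epsilon>) * \<psi> u \<and> 1 \<le> u \<and> 1 \<le> \<psi> u) at_top"
  proof -
    have "2*K > 0" using K0 by simp
    from psi_ratio_c[OF P H e(1) this]
    show ?thesis using psi_double[OF P H] eventually_ge_at_top[of 1] eventually_psi_ge[OF P, of 1]
      by eventually_elim auto
  qed
  show ?thesis using ev
  proof eventually_elim
    case (elim u)
    then have u1: "1 \<le> u" and psi1: "1 \<le> \<psi> u" and d2: "\<psi> (2*u) \<le> 2 * \<psi> u"
      and rat: "\<psi> ((2*K) * (u * \<psi> u)) \<le> (1+\<epsilon>) * \<psi> u" by auto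
    have u0: "0 < u" using u1 by simp
    have pu: "0 < \<psi> u" using psi1 by simp
    have Pb: "\<psi> u / 2 \<le> \<Psi> u" "\<Psi> u \<le> 2 * \<psi> u" using \<Psi>b[OF u1] d2 by auto
    have s_lo: "K * u * (\<psi> u / 2) \<le> s u" unfolding s_def using Pb K0 u0 by (intro mult_left_mono) auto
    have "K * u * \<Psi> u \<le> K * u * (2 * \<psi> u)" using Pb K0 u0 by (intro mult_left_mono) auto
    then have s_hi: "s u \<le> 2*K*u*\<psi> u" unfolding s_def by (simp add: algebra_simps)
    have "u \<le> K * u * (\<psi> u / 2)"
    proof -
      have "8 * 1 \<le> K * \<psi> u" using K0 psi1 by (intro mult_mono) auto
      then have k1: "1 \<le> K * (\<psi> u / 2)" by simp
      have "u * 1 \<le> u * (K * (\<psi> u / 2))" using k1 u0 by (intro mult_left_mono) auto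
      then show ?thesis by (simp add: algebra_simps)
    qed
    then have usu: "u \<le> s u" using s_lo by linarith
    have su0: "0 < s u" using usu u0 by linarith
    have psu: "\<psi> (s u) \<le> (1+\<epsilon>) * \<psi> u"
    proof -
      have "\<psi> (s u) \<le> \<psi> ((2*K) * (u * \<psi> u))" using psi_mono[OF P, of "s u"] su0 s_hi by (simp add: mult.assoc)
      then show ?thesis using rat by linarith
    qed
    have psu0: "0 < \<psi> (s u)" using psi_pos[OF P su0] .
    have dist: "distfun x (1/u) \<le> ennreal (s u)"
    proof (rule ccontr)
      assume "\<not> distfun x (1/u) \<le> ennreal (s u)"
      then have lt: "ennreal (s u) < distfun x (1/u)" by simp
      have "(1/u) * s u \<le> f (s u)" unfolding f_def by (rule f_lower[OF bx _ _ lt]) (use u0 su0 in auto)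
      also have "\<dots> \<le> C1 * \<psi> (s u)" by (rule fb[OF su0])
      also have "\<dots> \<le> C1 * ((1+\<epsilon>) * \<psi> u)" using psu C1 by (intro mult_left_mono) auto
      also have "\<dots> \<le> C1 * (2 * \<psi> u)" using e pu C1 by (intro mult_left_mono) auto
      finally have A: "(1/u) * s u \<le> 2 * C1 * \<psi> u" by simp
      have "(1/u) * (K * u * (\<psi> u / 2)) \<le> (1/u) * s u" using s_lo u0 by (intro mult_left_mono) auto
      moreover have "(1/u) * (K * u * (\<psi> u / 2)) = 4 * C1 * \<psi> u" using u0 K by (simp add: field_simps)
      ultimately have "4 * C1 * \<psi> u \<le> 2 * C1 * \<psi> u" using A by linarith
      then have "4 * (C1 * \<psi> u) \<le> 2 * (C1 * \<psi> u)" by (simp add: mult.assoc)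
      moreover have "0 < C1 * \<psi> u" using C1 pu by simp
      ultimately show False by linarith
    qed
    have F: "stieltjes_tail x (1/u) \<le> f (s u)" "0 \<le> stieltjes_tail x (1/u)"
      using F_le[OF bx _ _ dist] u0 su0 unfolding f_def by auto
    have f0: "0 \<le> f (s u)" unfolding f_def by (rule rearr_int_nonneg[OF bx])
    have "(1 / \<psi> u) * stieltjes_tail x (1/u) \<le> (1 / \<psi> u) * f (s u)"
      using F pu by (intro mult_left_mono) auto
    also have "\<dots> = (\<psi> (s u) / \<psi> u) * ((1 / \<psi> (s u)) * f (s u))" using psu0 pu by simp
    also have "\<dots> \<le> (1+\<epsilon>) * ((1 / \<psi> (s u)) * f (s u))"
    proof (rule mult_right_mono)
      show "\<psi> (s u) / \<psi> u \<le> 1 + \<epsilon>" using psu pu by (simp add: divide_le_eq)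
      show "0 \<le> 1 / \<psi> (s u) * f (s u)" using psu0 f0 by simp
    qed
    finally show ?case using u1 usu s_hi dist by (auto simp: le_less_trans)
  qed
qed


lemma meas_prod_mono:
  fixes h g :: "real \<Rightarrow> real"
  assumes "\<And>a b. a \<le> b \<Longrightarrow> h b \<le> h a" "\<And>a b. a \<le> b \<Longrightarrow> g a \<le> g b"
  shows "(\<lambda>t. h t * g t) \<in> borel_measurable borel"
proof -
  have "mono (\<lambda>t. - h t)" using assms(1) by (auto simp: mono_def)
  then have m1: "(\<lambda>t. - h t) \<in> borel_measurable borel" by (rule borel_measurable_mono)
  have "mono g" using assms(2) by (auto simp: mono_def)
  then have m2: "g \<in> borel_measurable borel" by (rule borel_measurable_mono)
  have "(\<lambda>t. - (- h t) * g t) \<in> borel_measurable borel" using m1 m2 by measurable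
  then show ?thesis by simp
qed

theorem lemma2p5:
  fixes \<psi> :: "real \<Rightarrow> real" and \<gamma> :: "(real \<Rightarrow> real) \<Rightarrow> real" and x :: "real \<Rightarrow> real"
  assumes "Psi_class \<psi>"
    and "((\<lambda>t. \<psi> (t * \<psi> t) / \<psi> t) \<longlongrightarrow> 1) at_top"
    and "generalised_limit \<gamma>"
    and "M_psi \<psi> x"
    and "AE s in lebesgue. 0 < s \<longrightarrow> 0 \<le> x s"
  shows "dixmier_omega \<gamma> (\<lambda>t. (1 / \<psi> t) * stieltjes_tail x (1 / t)) \<le> dixmier_trace \<gamma> \<psi> x"
proof -
  note P = assms(1) and H = assms(2) and g = assms(3)
  have bx: "bmeas x" using assms(4) unfolding M_psi_def by auto
  define f where "f = (\<lambda>t. LINT v:{0..t}|lborel. rearr x v)"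
  have "bdd_above ((\<lambda>t. (1 / \<psi> t) * f t) ` {0<..})" using assms(4) unfolding M_psi_def f_def by auto
  then obtain C where C: "\<And>t. 0 < t \<Longrightarrow> (1 / \<psi> t) * f t \<le> C" by (auto simp: bdd_above_def)
  define C1 where "C1 = max C 1"
  have C1: "1 \<le> C1" by (simp add: C1_def)
  have fb: "f t \<le> C1 * \<psi> t" if t: "0 < t" for t
  proof -
    have pt: "0 < \<psi> t" by (rule psi_pos[OF P t])
    have "f t \<le> C * \<psi> t" using C[OF t] pt by (simp add: field_simps)
    also have "\<dots> \<le> C1 * \<psi> t" using pt by (intro mult_right_mono) (auto simp: C1_def)
    finally show ?thesis .
  qed
  have f0: "0 \<le> f t" for t unfolding f_def by (rule rearr_int_nonneg[OF bx])
  have fmono: "f a \<le> f b" if "a \<le> b" for a b unfolding f_def by (rule f_mono[OF bx that])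
  obtain \<Psi> where \<Psi>d: "\<And>u. u \<ge> 1 \<Longrightarrow> (\<Psi> has_real_derivative ((\<psi> (2*u) - \<psi> u) / u)) (at u)"
    and \<Psi>b: "\<And>u. u \<ge> 1 \<Longrightarrow> \<psi> u / 2 \<le> \<Psi> u \<and> \<Psi> u \<le> \<psi> (2*u)"
    using smoothing[OF P] by blast
  define K where "K = 8 * C1"
  define s where "s = (\<lambda>u. K * u * \<Psi> u)"
  define s' where "s' = (\<lambda>u. K * (\<Psi> u + (\<psi> (2*u) - \<psi> u)))"
  have K0: "0 < K" "8 \<le> K" using C1 by (auto simp: K_def)
  have sd: "(s has_real_derivative s' u) (at u)" if u: "1 \<le> u" for u
  proof -
    have 1: "((\<lambda>u. K * u) has_real_derivative K) (at u)" by (auto intro!: derivative_eq_intros)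
    have "((\<lambda>u. K * u * \<Psi> u) has_real_derivative (K * \<Psi> u + ((\<psi> (2*u) - \<psi> u) / u) * (K * u))) (at u)"
      by (rule DERIV_mult[OF 1 \<Psi>d[OF u]])
    moreover have "K * \<Psi> u + ((\<psi> (2*u) - \<psi> u) / u) * (K * u) = s' u" using u by (simp add: s'_def field_simps)
    ultimately show ?thesis unfolding s_def by simp
  qed
  have s'c: "continuous_on {a..b} s'" if a: "1 \<le> a" for a b
  proof -
    have "continuous_on {a..b} \<Psi>"
    proof (rule continuous_at_imp_continuous_on, rule ballI)
      fix u assume "u \<in> {a..b}"
      then have "1 \<le> u" using a by auto
      then show "isCont \<Psi> u" by (rule DERIV_isCont[OF \<Psi>d])
    qed
    moreover have "continuous_on {a..b} \<psi>" by (rule continuous_on_subset[OF psi_cont[OF P]]) (use a in auto)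
    moreover have "continuous_on {a..b} (\<lambda>u. \<psi> (2*u))"
    proof -
      have "continuous_on ((\<lambda>u. 2*u) ` {a..b}) \<psi>" by (rule continuous_on_subset[OF psi_cont[OF P]]) (use a in auto)
      then show ?thesis by (intro continuous_on_compose2[of _ \<psi> _ "\<lambda>u. 2*u"]) (auto intro!: continuous_intros)
    qed
    ultimately show ?thesis unfolding s'_def by (intro continuous_intros)
  qed
  have s'ge: "s u / u \<le> s' u" if u: "1 \<le> u" for u
  proof -
    have "\<psi> u \<le> \<psi> (2*u)" using psi_mono[OF P, of u "2*u"] u by auto
    then have "K * \<Psi> u \<le> K * (\<Psi> u + (\<psi> (2*u) - \<psi> u))" using K0 by (intro mult_left_mono) auto
    then show ?thesis using u by (simp add: s_def s'_def)
  qed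
  define Y1 where "Y1 = (\<lambda>t. (1 / \<psi> (max t 1)) * stieltjes_tail x (1 / max t 1))"
  define Y2 where "Y2 = (\<lambda>t. (1 / \<psi> (max t 1)) * f (max t 1))"
  have keyA': "eventually (\<lambda>u. 1 \<le> u \<and> (1 / \<psi> u) * stieltjes_tail x (1/u) \<le> (1+\<epsilon>) * ((1 / \<psi> (s u)) * f (s u))
      \<and> u \<le> s u \<and> s u \<le> 2*K*u*\<psi> u \<and> distfun x (1/u) < \<infinity>) at_top" if "0 < \<epsilon>" "\<epsilon> \<le> 1" for \<epsilon>
    by (rule keyA[OF P H bx C1 f_def fb \<Psi>b K_def s_def that])
  obtain T0 where T0: "\<And>u. u \<ge> T0 \<Longrightarrow> 1 \<le> u \<and> (1 / \<psi> u) * stieltjes_tail x (1/u) \<le> (1+1) * ((1 / \<psi> (s u)) * f (s u))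
      \<and> u \<le> s u \<and> s u \<le> 2*K*u*\<psi> u \<and> distfun x (1/u) < \<infinity>"
    using keyA'[of 1] by (auto simp: eventually_at_top_linorder)
  have T01: "1 \<le> T0" using T0[of T0] by auto
  have fin: "distfun x (1/u) < \<infinity>" if u: "1 \<le> u" for u
  proof (cases "u \<ge> T0")
    case True then show ?thesis using T0 by blast
  next
    case False
    then have "1/T0 \<le> 1/u" using u by (auto simp: frac_le)
    then have "distfun x (1/u) \<le> distfun x (1/T0)" by (rule distfun_antimono[OF bx])
    then show ?thesis using T0[of T0] by (simp add: le_less_trans)
  qed
  have Fnn: "0 \<le> stieltjes_tail x (1/u)" if u: "1 \<le> u" for u
  proof -
    have up: "0 < 1/u" using u by simp
    show ?thesis unfolding F_repr[OF bx up fin[OF u]] by (rule rearr_int_nonneg[OF bx])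
  qed
  have Fmono: "stieltjes_tail x (1/u) \<le> stieltjes_tail x (1/u')" if "1 \<le> u" "u \<le> u'" for u u'
    by (rule F_mono[OF bx _ _ fin]) (use that in \<open>auto simp: frac_le\<close>)
  have Y2b: "0 \<le> Y2 t \<and> Y2 t \<le> C1" for t
  proof -
    define m where "m = max t 1"
    have m: "1 \<le> m" by (simp add: m_def)
    have pm: "0 < \<psi> m" using psi_pos[OF P, of m] m by simp
    have "(1 / \<psi> m) * f m \<le> (1 / \<psi> m) * (C1 * \<psi> m)" using fb[of m] m pm by (intro mult_left_mono) auto
    then show ?thesis using pm f0[of m] unfolding Y2_def m_def[symmetric] by simp
  qed
  define B1 where "B1 = max (2 * C1) (stieltjes_tail x (1/T0) / \<psi> 1)"
  have Y1b: "0 \<le> Y1 t \<and> Y1 t \<le> B1" for t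
  proof -
    define m where "m = max t 1"
    have m: "1 \<le> m" by (simp add: m_def)
    have pm: "0 < \<psi> m" using psi_pos[OF P, of m] m by simp
    have nn: "0 \<le> Y1 t" unfolding Y1_def m_def[symmetric] using Fnn[OF m] pm by simp
    have "Y1 t \<le> B1"
    proof (cases "T0 \<le> m")
      case True
      note Tm = T0[OF True]
      have sm: "1 \<le> s m" using Tm m by linarith
      have psm: "0 < \<psi> (s m)" using psi_pos[OF P, of "s m"] sm by simp
      have "(1 / \<psi> (s m)) * f (s m) \<le> (1 / \<psi> (s m)) * (C1 * \<psi> (s m))"
        using fb[of "s m"] sm psm by (intro mult_left_mono) auto
      then have "(1 / \<psi> (s m)) * f (s m) \<le> C1" using psm by simp
      moreover have "(1 / \<psi> m) * stieltjes_tail x (1/m) \<le> 2 * ((1 / \<psi> (s m)) * f (s m))"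
        using Tm by (simp only: one_add_one)
      ultimately have "Y1 t \<le> 2 * C1" unfolding Y1_def m_def[symmetric] by linarith
      then show ?thesis unfolding B1_def by linarith
    next
      case False
      have p1: "0 < \<psi> 1" using psi_pos[OF P, of 1] by simp
      have "stieltjes_tail x (1/m) \<le> stieltjes_tail x (1/T0)" using Fmono[OF m] False by simp
      moreover have "\<psi> 1 \<le> \<psi> m" using psi_mono[OF P, of 1 m] m by simp
      ultimately have "stieltjes_tail x (1/m) / \<psi> m \<le> stieltjes_tail x (1/T0) / \<psi> 1"
        using Fnn[OF m] p1 pm by (meson divide_mono order_trans Fnn T01 less_imp_le)
      then show ?thesis unfolding Y1_def m_def[symmetric] B1_def by simp
    qed
    then show ?thesis using nn by simp
  qed
  have B10: "0 \<le> B1" using Y1b[of 0] by simp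
  have inv_anti: "1 / \<psi> (max b 1) \<le> 1 / \<psi> (max a 1)" if ab: "a \<le> b" for a b
  proof -
    have p1: "0 < \<psi> (max a 1)" using psi_pos[OF P, of "max a 1"] by simp
    have "\<psi> (max a 1) \<le> \<psi> (max b 1)" using psi_mono[OF P, of "max a 1" "max b 1"] ab by simp
    then show ?thesis using p1 by (intro frac_le) auto
  qed
  have Y2m: "Y2 \<in> borel_measurable borel" unfolding Y2_def
  proof (rule meas_prod_mono)
    fix a b :: real assume "a \<le> b"
    then show "1 / \<psi> (max b 1) \<le> 1 / \<psi> (max a 1)" by (rule inv_anti)
    show "f (max a 1) \<le> f (max b 1)" using \<open>a \<le> b\<close> by (intro fmono) auto
  qed
  have Y1m: "Y1 \<in> borel_measurable borel" unfolding Y1_def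
  proof (rule meas_prod_mono)
    fix a b :: real assume "a \<le> b"
    then show "1 / \<psi> (max b 1) \<le> 1 / \<psi> (max a 1)" by (rule inv_anti)
    show "stieltjes_tail x (1 / max a 1) \<le> stieltjes_tail x (1 / max b 1)" using \<open>a \<le> b\<close> by (intro Fmono) auto
  qed
  define M1 where "M1 = Mmean Y1"
  define M2 where "M2 = Mmean Y2"
  have M1p: "bmeas M1" "\<And>t. 0 \<le> M1 t" "\<And>t. M1 t \<le> B1"
    unfolding M1_def using Mmean_props[OF Y1m, of B1] Y1b by auto
  have M2p: "bmeas M2" "\<And>t. 0 \<le> M2 t" "\<And>t. M2 t \<le> C1"
    unfolding M2_def using Mmean_props[OF Y2m, of C1] Y2b by auto
  have main: "eventually (\<lambda>t. M1 t - M2 t \<le> \<eta>) at_top" if eta: "0 < \<eta>" for \<eta>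
  proof -
    define \<epsilon> where "\<epsilon> = min 1 (\<eta> / (4 * C1))"
    have e: "0 < \<epsilon>" "\<epsilon> \<le> 1" "\<epsilon> * C1 \<le> \<eta> / 4" using eta C1
      by (auto simp: \<epsilon>_def min_def field_simps)
    obtain T where T: "\<And>u. u \<ge> T \<Longrightarrow> 1 \<le> u \<and> (1 / \<psi> u) * stieltjes_tail x (1/u) \<le> (1+\<epsilon>) * ((1 / \<psi> (s u)) * f (s u))
      \<and> u \<le> s u \<and> s u \<le> 2*K*u*\<psi> u \<and> distfun x (1/u) < \<infinity>"
      using keyA'[OF e(1,2)] by (auto simp: eventually_at_top_linorder)
    have T1: "1 \<le> T" using T[of T] by auto
    define \<delta> where "\<delta> = \<eta> / (8 * C1)"
    have d: "0 < \<delta>" "2 * C1 * \<delta> = \<eta> / 4" using eta C1 by (auto simp: \<delta>_def field_simps)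
    define c where "c = B1 * ln T + 2 * C1 * ln (2*K)"
    have ev_ln: "eventually (\<lambda>t. c \<le> (\<eta>/2) * ln t) at_top"
    proof -
      have "eventually (\<lambda>t. ln t \<ge> c / (\<eta>/2)) at_top"
        using ln_at_top by (simp add: filterlim_at_top)
      then show ?thesis by eventually_elim (use eta in \<open>simp add: field_simps\<close>)
    qed
    show ?thesis
      using ev_ln psi_log_small[OF P H d(1)] eventually_gt_at_top[of T] eventually_psi_ge[OF P, of 1]
    proof eventually_elim
      case (elim t)
      have tT: "T < t" and t1: "1 < t" using elim T1 by auto
      have L: "0 < ln t" using t1 by simp
      have Tt: "T \<le> t" using tT by simp
      note Tt' = T[OF Tt]
      have cmp: "(LINT u:{1..t}|lborel. Y1 u / u)
         \<le> B1 * ln T + (1+\<epsilon>) * (LINT u:{1..t}|lborel. Y2 u / u) + (1+\<epsilon>) * C1 * (ln (s t) - ln t)"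
      proof (rule compare[OF T1 tT Y1m Y2m Y1b Y2b, where s' = s'])
        show "0 \<le> \<epsilon>" using e by simp
        fix u assume u: "u \<in> {T..t}"
        then have Tu: "T \<le> u" by simp
        note Tu' = T[OF Tu]
        have u1: "1 \<le> u" and su: "u \<le> s u" using Tu' by auto
        then have su1: "1 \<le> s u" by linarith
        have mx: "max u 1 = u" "max (s u) 1 = s u" using u1 su1 by auto
        show "Y1 u \<le> (1+\<epsilon>) * Y2 (s u)" unfolding Y1_def Y2_def mx using Tu' by blast
        show "u \<le> s u" by (rule su)
        show "(s has_real_derivative s' u) (at u)" by (rule sd[OF u1])
        show "s u / u \<le> s' u" by (rule s'ge[OF u1])
      next
        show "continuous_on {T..t} s'" by (rule s'c[OF T1])
      qed
      define I1 where "I1 = (LINT u:{1..t}|lborel. Y1 u / u)"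
      define I2 where "I2 = (LINT u:{1..t}|lborel. Y2 u / u)"
      have M1t: "M1 t = I1 / ln t" and M2t: "M2 t = I2 / ln t"
        using t1 by (simp_all add: M1_def M2_def Mmean_def I1_def I2_def)
      have I2b: "I2 \<le> C1 * ln t" using M2p(3)[of t] L unfolding M2t by (simp add: divide_le_eq)
      have I20: "0 \<le> I2" using M2p(2)[of t] L unfolding M2t by (simp add: zero_le_divide_iff)
      have st0: "0 < s t" using Tt' t1 by linarith
      have pt: "0 < \<psi> t" using elim by linarith
      have "ln (s t) \<le> ln (2*K*t*\<psi> t)" using Tt' st0 by simp
      also have "\<dots> = ln (2*K) + ln t + ln (\<psi> t)" using K0 t1 pt by (simp add: ln_mult)
      finally have lst: "ln (s t) - ln t \<le> ln (2*K) + \<delta> * ln t" using elim by linarith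
      have lK: "0 \<le> ln (2*K)" using K0 by simp
      have lp: "0 \<le> ln (\<psi> t)" using elim by simp
      have lst0: "0 \<le> ln (s t) - ln t" using Tt' t1 st0 by simp
      have "I1 - I2 \<le> B1 * ln T + \<epsilon> * I2 + (1+\<epsilon>) * C1 * (ln (s t) - ln t)"
        using cmp unfolding I1_def[symmetric] I2_def[symmetric] by (simp add: algebra_simps)
      also have "\<epsilon> * I2 \<le> \<epsilon> * (C1 * ln t)" using I2b e by (intro mult_left_mono) auto
      also have "(1+\<epsilon>) * C1 * (ln (s t) - ln t) \<le> 2 * C1 * (ln (2*K) + \<delta> * ln t)"
      proof -
        have "(1+\<epsilon>) * C1 * (ln (s t) - ln t) \<le> 2 * C1 * (ln (s t) - ln t)"
          using e C1 lst0 by (intro mult_right_mono) auto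
        also have "\<dots> \<le> 2 * C1 * (ln (2*K) + \<delta> * ln t)" using lst C1 by (intro mult_left_mono) auto
        finally show ?thesis .
      qed
      finally have "I1 - I2 \<le> c + (\<epsilon> * C1) * ln t + (2 * C1 * \<delta>) * ln t"
        unfolding c_def by (simp add: algebra_simps)
      also have "\<dots> \<le> (\<eta>/2) * ln t + (\<eta>/4) * ln t + (\<eta>/4) * ln t"
        using elim(1) e(3) d(2) L by (intro add_mono mult_right_mono) auto
      finally have "I1 - I2 \<le> \<eta> * ln t" by simp
      then have "(I1 - I2) / ln t \<le> \<eta>" using L by (simp add: divide_le_eq)
      then show ?case unfolding M1t M2t by (simp add: diff_divide_distrib)
    qed
  qed
  define D where "D = (\<lambda>t. max 0 (M1 t + (-1) * M2 t))"
  have Dm: "bmeas D" unfolding D_def by (intro bmeas_max0 bmeas_add bmeas_cmult M1p(1) M2p(1))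
  have Dl: "(D \<longlongrightarrow> 0) at_top"
  proof (rule order_tendstoI)
    fix a :: real assume a0: "a < 0"
    show "eventually (\<lambda>t. a < D t) at_top"
    proof (intro always_eventually allI)
      fix t show "a < D t" using a0 by (simp add: D_def less_max_iff_disj)
    qed
  next
    fix a :: real assume a: "0 < a"
    have "eventually (\<lambda>t. M1 t - M2 t \<le> a/2) at_top" using main[of "a/2"] a by simp
    then show "eventually (\<lambda>t. D t < a) at_top" by eventually_elim (use a in \<open>auto simp: D_def\<close>)
  qed
  have le: "\<gamma> M1 \<le> \<gamma> M2"
    by (rule gamma_le[OF g M1p(1) M2p(1) Dm Dl]) (auto simp: D_def)
  have e1: "Mmean (\<lambda>t. (1 / \<psi> t) * stieltjes_tail x (1 / t)) = M1"
    unfolding M1_def by (rule Mmean_cong) (simp add: Y1_def max_def)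
  have e2: "Mmean (\<lambda>t. (1 / \<psi> t) * (LINT s:{0..t}|lborel. rearr x s)) = M2"
    unfolding M2_def by (rule Mmean_cong) (simp add: Y2_def f_def max_def)
  show ?thesis unfolding dixmier_trace_def dixmier_omega_def e1 e2 by (rule le)
qed


end
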